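(* Let $n\ge 3$ and let $\Delta^c(D_{2n})$ be the conjugacy super commuting graph of the dihedral group $D_{2n}$. (i) If $n$ is odd, the Sombor spectrum of $\Delta^c(D_{2n})$ consists of $-(n-1)\sqrt2$ with multiplicity $n-2$, $-n\sqrt2$ with multiplicity $n-1$, and the three roots (with multiplicity) of \[x\big(x-(n-1)(n-2)\sqrt2\big)\big(x-n(n-1)\sqrt2\big)-(n-1)(5n^2-6n+2)\big(x-n(n-1)\sqrt2\big)-n(5n^2-4n+1)\big(x-(n-1)(n-2)\sqrt2\big).\] (ii) If $n$ is even and $n/2$ is odd, the Sombor spectrum consists of $-(n+1)\sqrt2$ with multiplicity $n-1$, $-(n-1)\sqrt2$ with multiplicity $n-3$, $-(2n-1)\sqrt2$ with multiplicity $1$, and the three roots (with multiplicity) of \[\big(x-(2n-1)\sqrt2\big)\big(x-(n-1)(n+1)\sqrt2\big)\big(x-(n-1)(n-3)\sqrt2\big)-2(n-2)(5n^2-6n+2)\big(x-(n-1)(n+1)\sqrt2\big)-2n(5n^2-2n+2)\big(x-(n-1)(n-3)\sqrt2\big).\] (iii) If $n$ is divisible by $4$, the Sombor spectrum consists of $-(\tfrac n2+1)\sqrt2$ with multiplicity $n-2$, $-(n-1)\sqrt2$ with multiplicity $n-3$, $-(2n-1)\sqrt2$ with multiplicity $1$, and the four roots (with multiplicity) of \[\big(x-(2n-1)\sqrt2\big)\big(x-(n-1)(n-3)\sqrt2\big)\big(x-(\tfrac n2-1)(\tfrac n2+1)\sqrt2\big)^2-2(n-2)(5n^2-6n+2)\big(x-(\tfrac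 n2-1)(\tfrac n2+1)\sqrt2\big)^2-2n\Big[(2n-1)^2+(\tfrac n2+1)^2\Big]\big(x-(n-3)(n-1)\sqrt2\big)\big(x-(\tfrac n2-1)(\tfrac n2+1)\sqrt2\big).\]
   Context: For a finite simple graph $\Gamma$ with vertices $u_1,\dots,u_N$, the Sombor matrix $S(\Gamma)$ has $(i,j)$ entry $\sqrt{\deg(u_i)^2+\deg(u_j)^2}$ if $u_i,u_j$ are adjacent and $0$ otherwise; the Sombor spectrum is the multiset of its eigenvalues. $D_{2n}=\langle a,b: a^n=b^2=e,\ ba=a^{-1}b\rangle$. The conjugacy super commuting graph $\Delta^c(G)$ has vertex set $G$, and distinct $g,h$ are adjacent iff $g,h$ are conjugate in $G$ or there exist distinct $g'$ conjugate to $g$ and $h'$ conjugate to $h$ with $g'h'=h'g'$. *)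

theory Defs
  imports "HOL-Algebra.Group" "Jordan_Normal_Form.Char_Poly"
begin

text \<open>Concrete model: the pair (i, s) with 0 \<le> i < n stands for a^i b^s (s = True meaning b^1).
  Then a^i b^s * a^j b^t = a^(i + (-1)^s j) b^(s+t), using b a = a^-1 b.\<close>

definition dihedral_group :: "nat \<Rightarrow> (int \<times> bool) monoid" where
  "dihedral_group n = \<lparr> carrier = {0..<int n} \<times> UNIV,
     mult = (\<lambda>(i, s) (j, t). ((if s then i - j else i + j) mod int n, s \<noteq> t)),
     one = (0, False) \<rparr>"

definition dihedral_vertices :: "nat \<Rightarrow> (int \<times> bool) list" where
  "dihedral_vertices n = map (\<lambda>i. (int i, False)) [0..<n] @ map (\<lambda>i. (int i, True)) [0..<n]"

definition conjugate_in :: "('a, 'b) monoid_scheme \<Rightarrow> 'a \<Rightarrow> 'a \<Rightarrow> bool" where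
  "conjugate_in G g h \<longleftrightarrow> (\<exists>x\<in>carrier G. h = x \<otimes>\<^bsub>G\<^esub> g \<otimes>\<^bsub>G\<^esub> inv\<^bsub>G\<^esub> x)"

definition csc_adj :: "('a, 'b) monoid_scheme \<Rightarrow> 'a \<Rightarrow> 'a \<Rightarrow> bool" where
  "csc_adj G g h \<longleftrightarrow> g \<in> carrier G \<and> h \<in> carrier G \<and> g \<noteq> h \<and>
     (conjugate_in G g h \<or>
      (\<exists>g'\<in>carrier G. \<exists>h'\<in>carrier G. g' \<noteq> h' \<and> conjugate_in G g g' \<and> conjugate_in G h h'
          \<and> g' \<otimes>\<^bsub>G\<^esub> h' = h' \<otimes>\<^bsub>G\<^esub> g'))"

definition csc_deg :: "('a, 'b) monoid_scheme \<Rightarrow> 'a \<Rightarrow> nat" where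
  "csc_deg G g = card {h \<in> carrier G. csc_adj G g h}"

definition sombor_matrix :: "('a, 'b) monoid_scheme \<Rightarrow> 'a list \<Rightarrow> real mat" where
  "sombor_matrix G vs = mat (length vs) (length vs) (\<lambda>(i, j).
     if csc_adj G (vs ! i) (vs ! j)
     then sqrt (real (csc_deg G (vs ! i)) ^ 2 + real (csc_deg G (vs ! j)) ^ 2) else 0)"

definition sombor_spectrum :: "('a, 'b) monoid_scheme \<Rightarrow> 'a list \<Rightarrow> complex multiset" where
  "sombor_spectrum G vs = proots (char_poly (map_mat complex_of_real (sombor_matrix G vs)))"

definition lin :: "complex \<Rightarrow> complex poly" where
  "lin c = [:- c, 1:]"

end

theory Submission
  imports Defs
begin


lemma sylvester_det:
  fixes U :: "'a :: field mat"
  assumes U: "U \<in> carrier_mat N p" and V: "V \<in> carrier_mat p N"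
  shows "det (1\<^sub>m N + U * V) = det (1\<^sub>m p + V * U)"
proof -
  have e1: "four_block_mat (1\<^sub>m N) U (- V) (1\<^sub>m p) =
     four_block_mat (1\<^sub>m N) (0\<^sub>m N p) (- V) (1\<^sub>m p) * four_block_mat (1\<^sub>m N) U (0\<^sub>m p N) (1\<^sub>m p + V * U)"
    using U V by (subst mult_four_block_mat, auto simp: algebra_simps)
  have e2: "four_block_mat (1\<^sub>m N) U (- V) (1\<^sub>m p) =
     four_block_mat (1\<^sub>m N + U * V) U (0\<^sub>m p N) (1\<^sub>m p) * four_block_mat (1\<^sub>m N) (0\<^sub>m N p) (- V) (1\<^sub>m p)"
  proof -
    have "four_block_mat (1\<^sub>m N + U * V) U (0\<^sub>m p N) (1\<^sub>m p) * four_block_mat (1\<^sub>m N) (0\<^sub>m N p) (- V) (1\<^sub>m p)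
      = four_block_mat ((1\<^sub>m N + U * V) * 1\<^sub>m N + U * - V) ((1\<^sub>m N + U * V) * 0\<^sub>m N p + U * 1\<^sub>m p)
          (0\<^sub>m p N * 1\<^sub>m N + 1\<^sub>m p * - V) (0\<^sub>m p N * 0\<^sub>m N p + 1\<^sub>m p * 1\<^sub>m p)"
      using U V by (intro mult_four_block_mat, auto)
    also have "(1\<^sub>m N + U * V) * 1\<^sub>m N + U * - V = 1\<^sub>m N"
    proof -
      have "(1\<^sub>m N + U * V) * 1\<^sub>m N + U * - V = (1\<^sub>m N + U * V) + - (U * V)"
        using U V by (simp add: mult_minus_distrib_mat[of _ N p])
      also have "\<dots> = 1\<^sub>m N" using U V by (intro eq_matI, auto)
      finally show ?thesis .
    qed
    finally show ?thesis using U V by simp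
  qed
  have d1: "det (four_block_mat (1\<^sub>m N) (0\<^sub>m N p) (- V) (1\<^sub>m p)) = 1"
    using V by (subst det_four_block_mat_upper_right_zero[of _ N _ p], auto)
  have "det (four_block_mat (1\<^sub>m N) U (- V) (1\<^sub>m p)) = det (1\<^sub>m p + V * U)"
    unfolding e1 using U V
    by (subst det_mult[of _ "N+p"], auto simp: d1 det_four_block_mat_lower_left_zero[of _ N _ p])
  moreover have "det (four_block_mat (1\<^sub>m N) U (- V) (1\<^sub>m p)) = det (1\<^sub>m N + U * V)"
    unfolding e2 using U V
    by (subst det_mult[of _ "N+p"], auto simp: d1 det_four_block_mat_lower_left_zero[of _ N _ p])
  ultimately show ?thesis by simp
qed


lemma det_diag_mat:
  fixes f :: "nat \<Rightarrow> 'a :: comm_ring_1"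
  shows "det (mat N N (\<lambda>(i,j). if i = j then f i else 0)) = (\<Prod>i<N. f i)"
proof -
  have "det (mat N N (\<lambda>(i,j). if i = j then f i else 0)) = prod_list (diag_mat (mat N N (\<lambda>(i,j). if i = j then f i else 0)))"
    by (rule det_upper_triangular[of _ N], auto simp: upper_triangular_def)
  also have "\<dots> = prod_list (map f [0..<N])" unfolding diag_mat_def
    by (intro arg_cong[where f=prod_list], auto)
  also have "\<dots> = (\<Prod>i<N. f i)"
    by (simp add: prod.list_conv_set_nth atLeast0LessThan)
  finally show ?thesis .
qed

lemma mult_diag_left:
  fixes M :: "'a :: comm_ring_1 mat"
  assumes "M \<in> carrier_mat N K"
  shows "mat N N (\<lambda>(i,j). if i = j then f i else 0) * M = mat N K (\<lambda>(i,j). f i * M $$ (i,j))"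
proof (rule eq_matI)
  fix i j assume i: "i < dim_row (mat N K (\<lambda>(i,j). f i * M $$ (i,j)))" and j: "j < dim_col (mat N K (\<lambda>(i,j). f i * M $$ (i,j)))"
  hence "(mat N N (\<lambda>(i,j). if i = j then f i else 0) * M) $$ (i,j) = (\<Sum>k<N. (if i = k then f i else 0) * M $$ (k,j))"
    using assms by (auto simp: scalar_prod_def atLeast0LessThan)
  also have "\<dots> = f i * M $$ (i,j)" using i
    by (simp add: if_distrib[of "\<lambda>x. x * _"] sum.delta cong: if_cong)
  finally show "(mat N N (\<lambda>(i,j). if i = j then f i else 0) * M) $$ (i,j) = mat N K (\<lambda>(i,j). f i * M $$ (i,j)) $$ (i,j)"
    using i j by simp
qed (use assms in auto)

lemma mult_diag_right:
  fixes M :: "'a :: comm_ring_1 mat"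
  assumes "M \<in> carrier_mat K N"
  shows "M * mat N N (\<lambda>(i,j). if i = j then f i else 0) = mat K N (\<lambda>(i,j). M $$ (i,j) * f j)"
proof (rule eq_matI)
  fix i j assume i: "i < dim_row (mat K N (\<lambda>(i,j). M $$ (i,j) * f j))" and j: "j < dim_col (mat K N (\<lambda>(i,j). M $$ (i,j) * f j))"
  hence "(M * mat N N (\<lambda>(i,j). if i = j then f i else 0)) $$ (i,j) = (\<Sum>k<N. M $$ (i,k) * (if k = j then f k else 0))"
    using assms by (auto simp: scalar_prod_def atLeast0LessThan)
  also have "\<dots> = M $$ (i,j) * f j" using j
    by (simp add: if_distrib[of "\<lambda>x. _ * x"] sum.delta' cong: if_cong)
  finally show "(M * mat N N (\<lambda>(i,j). if i = j then f i else 0)) $$ (i,j) = mat K N (\<lambda>(i,j). M $$ (i,j) * f j) $$ (i,j)"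
    using i j by simp
qed (use assms in auto)

lemma block_det:
  fixes C :: "nat \<Rightarrow> nat \<Rightarrow> complex" and blk :: "nat \<Rightarrow> nat" and x :: complex
  assumes blk: "\<And>i. i < N \<Longrightarrow> blk i < p"
  and nz: "\<And>b. b < p \<Longrightarrow> x + C b b \<noteq> 0"
  shows "det (x \<cdot>\<^sub>m 1\<^sub>m N - mat N N (\<lambda>(i,j). if i = j then 0 else C (blk i) (blk j)))
     = (\<Prod>i<N. (x + C (blk i) (blk i))) *
       det (mat p p (\<lambda>(b,c). (if b = c then x + C b b else 0) - C b c * of_nat (card {i. i < N \<and> blk i = c})))
       / (\<Prod>b<p. (x + C b b))"
proof -
  define w where "w i = x + C (blk i) (blk i)" for i
  define k where "k c = (of_nat (card {i. i < N \<and> blk i = c}) :: complex)" for c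
  define D where "D = mat N N (\<lambda>(i,j). if i = j then w i else 0)"
  define U where "U = mat N p (\<lambda>(i,b). if blk i = b then 1 / w i else 0)"
  define V where "V = mat p N (\<lambda>(b,j). - C b (blk j))"
  define Q where "Q = mat p p (\<lambda>(b,c). (if b = c then x + C b b else 0) - C b c * k c)"
  define E where "E = mat p p (\<lambda>(b,c). if b = c then 1 / (x + C b b) else 0)"
  have wnz: "i < N \<Longrightarrow> w i \<noteq> 0" for i using nz blk unfolding w_def by auto
  have wnz': "i < N \<Longrightarrow> x + C (blk i) (blk i) \<noteq> 0" for i using nz blk by auto
  have UV: "U * V = mat N N (\<lambda>(i,j). - C (blk i) (blk j) / w i)"
  proof (rule eq_matI)
    fix i j assume i: "i < dim_row (mat N N (\<lambda>(i,j). - C (blk i) (blk j) / w i))"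
      and j: "j < dim_col (mat N N (\<lambda>(i,j). - C (blk i) (blk j) / w i))"
    hence "(U * V) $$ (i,j) = (\<Sum>b<p. (if blk i = b then 1 / w i else 0) * - C b (blk j))"
      by (auto simp: U_def V_def scalar_prod_def atLeast0LessThan)
    also have "\<dots> = - C (blk i) (blk j) / w i" using i blk
      by (simp add: if_distrib[of "\<lambda>x. x * _"] sum_negf sum.delta cong: if_cong)
    finally show "(U * V) $$ (i,j) = mat N N (\<lambda>(i,j). - C (blk i) (blk j) / w i) $$ (i,j)" using i j by simp
  qed (auto simp: U_def V_def)
  have e1: "x \<cdot>\<^sub>m 1\<^sub>m N - mat N N (\<lambda>(i,j). if i = j then 0 else C (blk i) (blk j)) = D * (1\<^sub>m N + U * V)"
    unfolding D_def UV
    by (subst mult_diag_left[of _ N N], force, rule eq_matI, auto simp: wnz ring_distribs w_def[symmetric], simp add: w_def)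
  have "det (x \<cdot>\<^sub>m 1\<^sub>m N - mat N N (\<lambda>(i,j). if i = j then 0 else C (blk i) (blk j))) = det D * det (1\<^sub>m N + U * V)"
    unfolding e1 by (rule det_mult[of _ N], auto simp: D_def U_def V_def)
  also have "det D = (\<Prod>i<N. w i)" unfolding D_def by (rule det_diag_mat)
  also have "det (1\<^sub>m N + U * V) = det (1\<^sub>m p + V * U)"
    by (rule sylvester_det, auto simp: U_def V_def)
  also have "1\<^sub>m p + V * U = Q * E"
  proof -
    have VU: "V * U = mat p p (\<lambda>(b,c). - C b c * k c / (x + C c c))"
    proof (rule eq_matI)
      fix b c assume b: "b < dim_row (mat p p (\<lambda>(b,c). - C b c * k c / (x + C c c)))"
        and c: "c < dim_col (mat p p (\<lambda>(b,c). - C b c * k c / (x + C c c)))"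
      hence "(V * U) $$ (b,c) = (\<Sum>i<N. - C b (blk i) * (if blk i = c then 1 / w i else 0))"
        by (auto simp: U_def V_def scalar_prod_def atLeast0LessThan)
      also have "\<dots> = (\<Sum>i\<in>{i. i < N \<and> blk i = c}. - C b c / (x + C c c))"
        by (rule sum.mono_neutral_cong_right, auto simp: w_def)
      also have "\<dots> = - C b c * k c / (x + C c c)" by (simp add: k_def)
      finally show "(V * U) $$ (b,c) = mat p p (\<lambda>(b,c). - C b c * k c / (x + C c c)) $$ (b,c)" using b c by simp
    qed (auto simp: U_def V_def)
    show ?thesis unfolding VU E_def
      by (subst mult_diag_right[of _ p p], force simp: Q_def, rule eq_matI, auto simp: Q_def nz field_simps)
  qed
  also have "det (Q * E) = det Q * det E" by (rule det_mult[of _ p], auto simp: Q_def E_def)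
  also have "det E = (\<Prod>b<p. 1 / (x + C b b))" unfolding E_def by (rule det_diag_mat)
  finally show ?thesis unfolding Q_def k_def w_def by (simp add: prod_dividef)
qed



lemma poly_eq_cofinite:
  fixes p q :: "complex poly"
  assumes F: "finite F" and eq: "\<And>x. x \<notin> F \<Longrightarrow> poly p x = poly q x"
  shows "p = q"
proof (rule ccontr)
  assume "p \<noteq> q"
  hence "p - q \<noteq> 0" by simp
  hence fin: "finite {x. poly (p - q) x = 0}" by (rule poly_roots_finite)
  have "UNIV - F \<subseteq> {x. poly (p - q) x = 0}" using eq by auto
  hence "finite (UNIV - F :: complex set)" using fin finite_subset by blast
  hence "finite (UNIV :: complex set)" using F by (metis Diff_UNIV finite_Diff2)
  thus False by (simp add: infinite_UNIV_char_0)
qed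

lemma char_poly_block:
  fixes C :: "nat \<Rightarrow> nat \<Rightarrow> complex" and blk :: "nat \<Rightarrow> nat" and T :: "complex poly"
  assumes blk: "\<And>i. i < N \<Longrightarrow> blk i < p"
  and ne: "\<And>b. b < p \<Longrightarrow> card {i. i < N \<and> blk i = b} \<ge> 1"
  and T: "\<And>x. (\<And>b. b < p \<Longrightarrow> x + C b b \<noteq> 0) \<Longrightarrow>
      det (mat p p (\<lambda>(b,c). (if b = c then x + C b b else 0) - C b c * of_nat (card {i. i < N \<and> blk i = c}))) = poly T x"
  shows "char_poly (mat N N (\<lambda>(i,j). if i = j then 0 else C (blk i) (blk j)))
     = (\<Prod>b<p. [: C b b, 1 :] ^ (card {i. i < N \<and> blk i = b} - 1)) * T"
proof (rule poly_eq_cofinite)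
  let ?A = "mat N N (\<lambda>(i,j). if i = j then 0 else C (blk i) (blk j))"
  let ?k = "\<lambda>b. card {i. i < N \<and> blk i = b}"
  show "finite ((\<lambda>b. - C b b) ` {..<p})" by simp
  fix x assume x: "x \<notin> (\<lambda>b. - C b b) ` {..<p}"
  have nz: "b < p \<Longrightarrow> x + C b b \<noteq> 0" for b
  proof
    assume "b < p" "x + C b b = 0"
    hence "x = - C b b" "b \<in> {..<p}" by (auto simp: add_eq_0_iff)
    with x show False by blast
  qed
  have "poly (char_poly ?A) x = det (- char_matrix ?A x)"
    by (rule char_poly_matrix[of _ N], simp)
  also have "- char_matrix ?A x = x \<cdot>\<^sub>m 1\<^sub>m N - ?A"
    unfolding char_matrix_def by (rule eq_matI, auto)
  also have "det \<dots> = (\<Prod>i<N. (x + C (blk i) (blk i))) * poly T x / (\<Prod>b<p. (x + C b b))"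
  proof -
    have Tx: "det (mat p p (\<lambda>(b,c). (if b = c then x + C b b else 0) - C b c * of_nat (?k c))) = poly T x"
      by (rule T, rule nz)
    have "det (x \<cdot>\<^sub>m 1\<^sub>m N - ?A) = (\<Prod>i<N. (x + C (blk i) (blk i))) *
       det (mat p p (\<lambda>(b,c). (if b = c then x + C b b else 0) - C b c * of_nat (?k c))) / (\<Prod>b<p. (x + C b b))"
      by (rule block_det, rule blk, assumption, rule nz)
    thus ?thesis using Tx by simp
  qed
  also have "(\<Prod>i<N. (x + C (blk i) (blk i))) = (\<Prod>b<p. (x + C b b) ^ ?k b)"
  proof -
    have "(\<Prod>i<N. (x + C (blk i) (blk i))) = (\<Prod>b<p. \<Prod>i\<in>{i. i \<in> {..<N} \<and> blk i = b}. (x + C (blk i) (blk i)))"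
      by (rule prod.group[symmetric], auto simp: blk)
    also have "\<dots> = (\<Prod>b<p. (x + C b b) ^ ?k b)"
      by (rule prod.cong, simp, simp)
    finally show ?thesis .
  qed
  also have "(\<Prod>b<p. (x + C b b) ^ ?k b) * poly T x / (\<Prod>b<p. (x + C b b))
      = (\<Prod>b<p. (x + C b b) ^ (?k b - 1)) * poly T x"
  proof -
    have "(\<Prod>b<p. (x + C b b) ^ ?k b) = (\<Prod>b<p. (x + C b b) ^ (?k b - 1)) * (\<Prod>b<p. (x + C b b))"
      unfolding prod.distrib[symmetric]
    proof (rule prod.cong, simp)
      fix b assume "b \<in> {..<p}"
      with ne[of b] show "(x + C b b) ^ ?k b = (x + C b b) ^ (?k b - 1) * (x + C b b)"
        by (cases "?k b") (auto simp: mult.commute)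
    qed
    moreover have "(\<Prod>b<p. (x + C b b)) \<noteq> 0" using nz by simp
    ultimately show ?thesis by simp
  qed
  also have "\<dots> = poly ((\<Prod>b<p. [: C b b, 1 :] ^ (?k b - 1)) * T) x"
    by (simp add: poly_prod add.commute)
  finally show "poly (char_poly ?A) x = poly ((\<Prod>b<p. [: C b b, 1 :] ^ (?k b - 1)) * T) x" .
qed



lemma card_nth_image:
  assumes "distinct vs"
  shows "card {g \<in> set vs. P g} = card {i. i < length vs \<and> P (vs ! i)}"
proof -
  have "{g \<in> set vs. P g} = (\<lambda>i. vs ! i) ` {i. i < length vs \<and> P (vs ! i)}"
    by (auto simp: in_set_conv_nth)
  moreover have "inj_on (\<lambda>i. vs ! i) {i. i < length vs \<and> P (vs ! i)}"
    using assms by (auto simp: inj_on_def nth_eq_iff_index_eq)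
  ultimately show ?thesis by (simp add: card_image)
qed

lemma spectrum_block:
  fixes G :: "('a,'b) monoid_scheme" and vs :: "'a list" and cls :: "'a \<Rightarrow> nat"
    and badj :: "nat \<Rightarrow> nat \<Rightarrow> bool" and T :: "complex poly" and C :: "nat \<Rightarrow> nat \<Rightarrow> complex"
  assumes dist: "distinct vs" and setv: "set vs = carrier G"
  and cls: "\<And>g. g \<in> carrier G \<Longrightarrow> cls g < p"
  and adj: "\<And>g h. g \<in> carrier G \<Longrightarrow> h \<in> carrier G \<Longrightarrow> csc_adj G g h \<longleftrightarrow> g \<noteq> h \<and> badj (cls g) (cls h)"
  and refl: "\<And>b. b < p \<Longrightarrow> badj b b"
  and sz: "\<And>b. b < p \<Longrightarrow> card {i. i < length vs \<and> cls (vs ! i) = b} = sz b"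
  and sz1: "\<And>b. b < p \<Longrightarrow> sz b \<ge> 1"
  and dg: "\<And>b. b < p \<Longrightarrow> dg b = (\<Sum>c<p. if badj b c then sz c else 0) - 1"
  and Cdef: "\<And>b c. C b c = complex_of_real (if badj b c then sqrt (real (dg b)^2 + real (dg c)^2) else 0)"
  and T: "\<And>x. (\<And>b. b < p \<Longrightarrow> x + C b b \<noteq> 0) \<Longrightarrow>
      det (mat p p (\<lambda>(b,c). (if b = c then x + C b b else 0) - C b c * of_nat (sz c))) = poly T x"
  shows "sombor_spectrum G vs = (\<Sum>b<p. replicate_mset (sz b - 1) (- C b b)) + proots T"
proof -
  define N where "N = length vs"
  define blk where "blk i = cls (vs ! i)" for i
  have blk: "i < N \<Longrightarrow> blk i < p" for i using cls setv unfolding blk_def N_def by (metis nth_mem)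
  have mem: "i < N \<Longrightarrow> vs ! i \<in> carrier G" for i using setv unfolding N_def by (metis nth_mem)
  have adjI: "i < N \<Longrightarrow> j < N \<Longrightarrow> csc_adj G (vs ! i) (vs ! j) \<longleftrightarrow> i \<noteq> j \<and> badj (blk i) (blk j)" for i j
    using adj[OF mem mem] dist unfolding blk_def N_def by (simp add: nth_eq_iff_index_eq)
  have szN: "b < p \<Longrightarrow> card {i. i < N \<and> blk i = b} = sz b" for b using sz unfolding N_def blk_def by simp
  have deg: "csc_deg G (vs ! i) = dg (blk i)" if i: "i < N" for i
  proof -
    have "csc_deg G (vs ! i) = card {h \<in> set vs. csc_adj G (vs ! i) h}"
      unfolding csc_deg_def setv ..
    also have "\<dots> = card {j. j < N \<and> csc_adj G (vs ! i) (vs ! j)}"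
      using card_nth_image[OF dist] unfolding N_def by simp
    also have "{j. j < N \<and> csc_adj G (vs ! i) (vs ! j)} = {j. j < N \<and> badj (blk i) (blk j)} - {i}"
      using adjI i by auto
    also have "card \<dots> = card {j. j < N \<and> badj (blk i) (blk j)} - 1"
      using i blk[OF i] refl by (subst card_Diff_singleton, auto)
    also have "card {j. j < N \<and> badj (blk i) (blk j)} = (\<Sum>c<p. if badj (blk i) c then sz c else 0)"
    proof -
      have "card {j. j < N \<and> badj (blk i) (blk j)} = (\<Sum>j\<in>{j. j < N \<and> badj (blk i) (blk j)}. 1)" by simp
      also have "\<dots> = (\<Sum>c<p. \<Sum>j\<in>{j. j \<in> {j. j < N \<and> badj (blk i) (blk j)} \<and> blk j = c}. 1)"
        by (rule sum.group[symmetric], auto simp: blk)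
      also have "\<dots> = (\<Sum>c<p. if badj (blk i) c then sz c else 0)"
      proof (rule sum.cong, simp)
        fix c assume c: "c \<in> {..<p}"
        have "{j. j \<in> {j. j < N \<and> badj (blk i) (blk j)} \<and> blk j = c} = (if badj (blk i) c then {j. j < N \<and> blk j = c} else {})"
          by auto
        thus "(\<Sum>j\<in>{j. j \<in> {j. j < N \<and> badj (blk i) (blk j)} \<and> blk j = c}. 1) = (if badj (blk i) c then sz c else 0)"
          using szN[of c] c by simp
      qed
      finally show ?thesis .
    qed
    finally show ?thesis using dg[OF blk[OF i]] by simp
  qed
  have M: "map_mat complex_of_real (sombor_matrix G vs) = mat N N (\<lambda>(i,j). if i = j then 0 else C (blk i) (blk j))"
    unfolding sombor_matrix_def N_def[symmetric]
    by (rule eq_matI, auto simp: adjI deg Cdef)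
  have CP: "char_poly (mat N N (\<lambda>(i,j). if i = j then 0 else C (blk i) (blk j)))
     = (\<Prod>b<p. [: C b b, 1 :] ^ (card {i. i < N \<and> blk i = b} - 1)) * T"
  proof (rule char_poly_block)
    show "i < N \<Longrightarrow> blk i < p" for i by (rule blk)
    show "b < p \<Longrightarrow> 1 \<le> card {i. i < N \<and> blk i = b}" for b using szN sz1 by simp
    show "det (mat p p (\<lambda>(b, c). (if b = c then x + C b b else 0) - C b c * of_nat (card {i. i < N \<and> blk i = c}))) = poly T x"
      if "\<And>b. b < p \<Longrightarrow> x + C b b \<noteq> 0" for x
    proof -
      have "mat p p (\<lambda>(b, c). (if b = c then x + C b b else 0) - C b c * of_nat (card {i. i < N \<and> blk i = c}))
         = mat p p (\<lambda>(b, c). (if b = c then x + C b b else 0) - C b c * of_nat (sz c))"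
        by (rule eq_matI, auto simp: szN)
      thus ?thesis using T[OF that] by simp
    qed
  qed
  have prodeq: "(\<Prod>b<p. [: C b b, 1 :] ^ (card {i. i < N \<and> blk i = b} - 1)) = (\<Prod>b<p. [: C b b, 1 :] ^ (sz b - 1))"
    by (rule prod.cong, auto simp: szN)
  have cpnz: "char_poly (mat N N (\<lambda>(i,j). if i = j then 0 else C (blk i) (blk j))) \<noteq> 0"
    using degree_monic_char_poly[of "mat N N (\<lambda>(i,j). if i = j then 0 else C (blk i) (blk j))" N]
    by auto
  have Tnz: "T \<noteq> 0" using cpnz CP by auto
  have Pnz: "(\<Prod>b<p. [: C b b, 1 :] ^ (sz b - 1)) \<noteq> 0" by simp
  have "sombor_spectrum G vs = proots ((\<Prod>b<p. [: C b b, 1 :] ^ (sz b - 1)) * T)"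
    unfolding sombor_spectrum_def M CP prodeq ..
  also have "\<dots> = proots (\<Prod>b<p. [: C b b, 1 :] ^ (sz b - 1)) + proots T"
    by (rule proots_mult[OF Pnz Tnz])
  also have "proots (\<Prod>b<p. [: C b b, 1 :] ^ (sz b - 1)) = (\<Sum>b<p. replicate_mset (sz b - 1) (- C b b))"
    by (subst proots_prod, simp, simp add: proots_power)
  finally show ?thesis .
qed



lemma dih_carrier: "carrier (dihedral_group n) = {0..<int n} \<times> UNIV"
  by (simp add: dihedral_group_def)

lemma dih_mult: "(i, s) \<otimes>\<^bsub>dihedral_group n\<^esub> (j, t) = ((if s then i - j else i + j) mod int n, s \<noteq> t)"
  by (simp add: dihedral_group_def)

lemma dih_one: "\<one>\<^bsub>dihedral_group n\<^esub> = (0, False)"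
  by (simp add: dihedral_group_def)

lemma dih_group: assumes "n \<ge> 1" shows "group (dihedral_group n)"
proof (rule groupI)
  let ?G = "dihedral_group n"
  show "x \<otimes>\<^bsub>?G\<^esub> y \<in> carrier ?G" if "x \<in> carrier ?G" "y \<in> carrier ?G" for x y
    using that assms by (cases x, cases y, auto simp: dih_carrier dih_mult)
  show "\<one>\<^bsub>?G\<^esub> \<in> carrier ?G" using assms by (simp add: dih_carrier dih_one)
  show "(x \<otimes>\<^bsub>?G\<^esub> y) \<otimes>\<^bsub>?G\<^esub> z = x \<otimes>\<^bsub>?G\<^esub> (y \<otimes>\<^bsub>?G\<^esub> z)"
    if "x \<in> carrier ?G" "y \<in> carrier ?G" "z \<in> carrier ?G" for x y z
  proof -
    obtain i s j t k u where xyz: "x = (i, s)" "y = (j, t)" "z = (k, u)" by (cases x, cases y, cases z)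
    show ?thesis unfolding xyz dih_mult
      by (cases s; cases t; cases u; simp add: mod_simps algebra_simps)
  qed
  show "\<one>\<^bsub>?G\<^esub> \<otimes>\<^bsub>?G\<^esub> x = x" if "x \<in> carrier ?G" for x
    using that by (cases x, auto simp: dih_carrier dih_mult dih_one)
  show "\<exists>y\<in>carrier ?G. y \<otimes>\<^bsub>?G\<^esub> x = \<one>\<^bsub>?G\<^esub>" if "x \<in> carrier ?G" for x
  proof -
    obtain i s where x: "x = (i, s)" by (cases x)
    show ?thesis
    proof (cases s)
      case True
      thus ?thesis using that x assms by (intro bexI[of _ "(i, True)"], auto simp: dih_carrier dih_mult dih_one)
    next
      case False
      thus ?thesis using that x assms by (intro bexI[of _ "((- i) mod int n, False)"], auto simp: dih_carrier dih_mult dih_one mod_simps)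
    qed
  qed
qed

lemma dih_inv_rot:
  assumes "n \<ge> 1" "0 \<le> i" "i < int n"
  shows "inv\<^bsub>dihedral_group n\<^esub> (i, False) = ((- i) mod int n, False)"
  using assms by (intro group.inv_equality[OF dih_group]) (auto simp: dih_carrier dih_mult dih_one mod_simps)

lemma dih_inv_refl:
  assumes "n \<ge> 1" "0 \<le> i" "i < int n"
  shows "inv\<^bsub>dihedral_group n\<^esub> (i, True) = (i, True)"
  using assms by (intro group.inv_equality[OF dih_group]) (auto simp: dih_carrier dih_mult dih_one mod_simps)

lemma dih_conj_formula:
  assumes "n \<ge> 1" "0 \<le> i" "i < int n" "0 \<le> k" "k < int n"
  shows "(k, False) \<otimes>\<^bsub>dihedral_group n\<^esub> (i, False) \<otimes>\<^bsub>dihedral_group n\<^esub> inv\<^bsub>dihedral_group n\<^esub> (k, False) = (i, False)"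
    and "(k, True) \<otimes>\<^bsub>dihedral_group n\<^esub> (i, False) \<otimes>\<^bsub>dihedral_group n\<^esub> inv\<^bsub>dihedral_group n\<^esub> (k, True) = ((- i) mod int n, False)"
    and "(k, False) \<otimes>\<^bsub>dihedral_group n\<^esub> (i, True) \<otimes>\<^bsub>dihedral_group n\<^esub> inv\<^bsub>dihedral_group n\<^esub> (k, False) = ((i + 2 * k) mod int n, True)"
    and "(k, True) \<otimes>\<^bsub>dihedral_group n\<^esub> (i, True) \<otimes>\<^bsub>dihedral_group n\<^esub> inv\<^bsub>dihedral_group n\<^esub> (k, True) = ((i + 2 * (k - i)) mod int n, True)"
proof -
  have e: "(i + (k + (- k) mod int n)) mod int n = i"
  proof -
    have "(i + (k + (- k) mod int n)) mod int n = (i + (k + - k)) mod int n"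
      by (metis mod_add_right_eq)
    thus ?thesis using assms by simp
  qed
  show "(k, False) \<otimes>\<^bsub>dihedral_group n\<^esub> (i, False) \<otimes>\<^bsub>dihedral_group n\<^esub> inv\<^bsub>dihedral_group n\<^esub> (k, False) = (i, False)"
    using assms e by (simp add: dih_inv_rot dih_inv_refl dih_mult mod_simps algebra_simps)
qed (use assms in \<open>simp_all add: dih_inv_rot dih_inv_refl dih_mult mod_simps algebra_simps\<close>)



lemma conj_rot_iff:
  assumes "n \<ge> 1" "0 \<le> i" "i < int n"
  shows "conjugate_in (dihedral_group n) (i, False) h \<longleftrightarrow> h = (i, False) \<or> h = ((- i) mod int n, False)"
proof
  assume "conjugate_in (dihedral_group n) (i, False) h"
  then obtain k s where ks: "0 \<le> k" "k < int n"
    "h = (k, s) \<otimes>\<^bsub>dihedral_group n\<^esub> (i, False) \<otimes>\<^bsub>dihedral_group n\<^esub> inv\<^bsub>dihedral_group n\<^esub> (k, s)"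
    unfolding conjugate_in_def dih_carrier by auto
  thus "h = (i, False) \<or> h = ((- i) mod int n, False)"
    using dih_conj_formula[OF assms ks(1,2)] by (cases s, auto)
next
  assume "h = (i, False) \<or> h = ((- i) mod int n, False)"
  thus "conjugate_in (dihedral_group n) (i, False) h"
    unfolding conjugate_in_def dih_carrier
  proof
    assume "h = (i, False)"
    thus "\<exists>x\<in>{0..<int n} \<times> UNIV. h = x \<otimes>\<^bsub>dihedral_group n\<^esub> (i, False) \<otimes>\<^bsub>dihedral_group n\<^esub> inv\<^bsub>dihedral_group n\<^esub> x"
      using dih_conj_formula(1)[OF assms, of 0] assms by (intro bexI[of _ "(0, False)"], auto)
  next
    assume "h = ((- i) mod int n, False)"
    thus "\<exists>x\<in>{0..<int n} \<times> UNIV. h = x \<otimes>\<^bsub>dihedral_group n\<^esub> (i, False) \<otimes>\<^bsub>dihedral_group n\<^esub> inv\<^bsub>dihedral_group n\<^esub> x"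
      using dih_conj_formula(2)[OF assms, of 0] assms by (intro bexI[of _ "(0, True)"], auto)
  qed
qed

lemma conj_refl_iff:
  assumes "n \<ge> 1" "0 \<le> i" "i < int n"
  shows "conjugate_in (dihedral_group n) (i, True) h \<longleftrightarrow> (\<exists>k. h = ((i + 2 * k) mod int n, True))"
proof
  assume "conjugate_in (dihedral_group n) (i, True) h"
  then obtain k s where ks: "0 \<le> k" "k < int n"
    "h = (k, s) \<otimes>\<^bsub>dihedral_group n\<^esub> (i, True) \<otimes>\<^bsub>dihedral_group n\<^esub> inv\<^bsub>dihedral_group n\<^esub> (k, s)"
    unfolding conjugate_in_def dih_carrier by auto
  thus "\<exists>k. h = ((i + 2 * k) mod int n, True)"
  proof (cases s)
    case True
    with ks show ?thesis using dih_conj_formula(4)[OF assms ks(1,2)] by (intro exI[of _ "k - i"], simp)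
  qed (use dih_conj_formula[OF assms ks(1,2)] in auto)
next
  assume "\<exists>k. h = ((i + 2 * k) mod int n, True)"
  then obtain k where k: "h = ((i + 2 * k) mod int n, True)" by auto
  have "(k mod int n, False) \<otimes>\<^bsub>dihedral_group n\<^esub> (i, True) \<otimes>\<^bsub>dihedral_group n\<^esub> inv\<^bsub>dihedral_group n\<^esub> (k mod int n, False)
    = ((i + 2 * (k mod int n)) mod int n, True)"
    using assms by (intro dih_conj_formula(3), auto)
  also have "(i + 2 * (k mod int n)) mod int n = (i + 2 * k) mod int n"
    by (metis mod_add_right_eq mod_mult_right_eq)
  finally show "conjugate_in (dihedral_group n) (i, True) h"
    unfolding conjugate_in_def dih_carrier k using assms
    by (intro bexI[of _ "(k mod int n, False)"], auto)
qed

lemma refl_conj_odd: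
  assumes "odd n" "0 \<le> j" "j < int n"
  shows "\<exists>k. j = (i + 2 * k) mod int n"
proof -
  have h: "2 * (n div 2) + 1 = n" by (rule odd_two_times_div_two_succ[OF assms(1)])
  have "int n = int (2 * (n div 2) + 1)" using h by simp
  hence q: "int n = 2 * int (n div 2) + 1" by simp
  define q where "q = int (n div 2)"
  note q = q[folded q_def]
  have "i + 2 * ((j - i) * (q + 1)) = j + (j - i) * int n" unfolding q by (simp add: algebra_simps)
  hence "(i + 2 * ((j - i) * (q + 1))) mod int n = j" using assms by simp
  thus ?thesis by (intro exI[of _ "(j - i) * (q + 1)"]) simp
qed

lemma refl_conj_even:
  assumes "even n" "0 \<le> j" "j < int n"
  shows "(\<exists>k. j = (i + 2 * k) mod int n) \<longleftrightarrow> even (j - i)"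
proof
  assume "\<exists>k. j = (i + 2 * k) mod int n"
  then obtain k where k: "j = (i + 2 * k) mod int n" by auto
  have "j = i + 2 * k - int n * ((i + 2 * k) div int n)" unfolding k by (simp add: minus_div_mult_eq_mod[symmetric] algebra_simps)
  hence "j - i = 2 * k - int n * ((i + 2 * k) div int n)" by simp
  thus "even (j - i)" using assms(1) by simp
next
  assume "even (j - i)"
  then obtain k where "j - i = 2 * k" by (rule evenE)
  hence "j = (i + 2 * k) mod int n" using assms by simp
  thus "\<exists>k. j = (i + 2 * k) mod int n" by auto
qed

lemma comm_rot_rot: "(i, False) \<otimes>\<^bsub>dihedral_group n\<^esub> (j, False) = (j, False) \<otimes>\<^bsub>dihedral_group n\<^esub> (i, False)"
  by (simp add: dih_mult add.commute)

lemma comm_rot_refl: "(i, False) \<otimes>\<^bsub>dihedral_group n\<^esub> (j, True) = (j, True) \<otimes>\<^bsub>dihedral_group n\<^esub> (i, False) \<longleftrightarrow> int n dvd 2 * i"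
proof -
  have "(i, False) \<otimes>\<^bsub>dihedral_group n\<^esub> (j, True) = (j, True) \<otimes>\<^bsub>dihedral_group n\<^esub> (i, False) \<longleftrightarrow> (i + j) mod int n = (j - i) mod int n"
    by (simp add: dih_mult)
  also have "\<dots> \<longleftrightarrow> int n dvd (i + j) - (j - i)" by (rule mod_eq_dvd_iff)
  finally show ?thesis by (simp add: algebra_simps mult_2)
qed

lemma comm_refl_rot: "(j, True) \<otimes>\<^bsub>dihedral_group n\<^esub> (i, False) = (i, False) \<otimes>\<^bsub>dihedral_group n\<^esub> (j, True) \<longleftrightarrow> int n dvd 2 * i"
  by (subst eq_commute, rule comm_rot_refl)

lemma comm_refl_refl: "(i, True) \<otimes>\<^bsub>dihedral_group n\<^esub> (j, True) = (j, True) \<otimes>\<^bsub>dihedral_group n\<^esub> (i, True) \<longleftrightarrow> int n dvd 2 * (i - j)"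
proof -
  have "(i, True) \<otimes>\<^bsub>dihedral_group n\<^esub> (j, True) = (j, True) \<otimes>\<^bsub>dihedral_group n\<^esub> (i, True) \<longleftrightarrow> (i - j) mod int n = (j - i) mod int n"
    by (simp add: dih_mult)
  also have "\<dots> \<longleftrightarrow> int n dvd (i - j) - (j - i)" by (rule mod_eq_dvd_iff)
  finally show ?thesis by (simp add: algebra_simps mult_2)
qed



lemma conj_refl_refl_iff:
  assumes "n \<ge> 1" "0 \<le> i" "i < int n" "0 \<le> j" "j < int n"
  shows "conjugate_in (dihedral_group n) (i, True) (j, True) \<longleftrightarrow> odd n \<or> even (j - i)"
proof (cases "odd n")
  case True
  thus ?thesis using refl_conj_odd[OF True assms(4,5), of i] conj_refl_iff[OF assms(1-3)] by auto
next
  case False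
  thus ?thesis using refl_conj_even[of n j i] assms conj_refl_iff[OF assms(1-3)] by auto
qed

lemma conj_refl_any:
  assumes "n \<ge> 1" "0 \<le> i" "i < int n" "conjugate_in (dihedral_group n) (i, True) h"
  shows "\<exists>a. h = (a, True) \<and> 0 \<le> a \<and> a < int n \<and> (even n \<longrightarrow> even (a - i))"
proof -
  obtain k where k: "h = ((i + 2 * k) mod int n, True)" using conj_refl_iff[OF assms(1-3)] assms(4) by auto
  have "even n \<Longrightarrow> even ((i + 2 * k) mod int n - i)"
    using refl_conj_even[of n "(i + 2 * k) mod int n" i] assms(1) by auto
  thus ?thesis using k assms(1) by (intro exI[of _ "(i + 2 * k) mod int n"], auto)
qed

lemma conj_rot_any:
  assumes "n \<ge> 1" "0 \<le> i" "i < int n" "conjugate_in (dihedral_group n) (i, False) h"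
  shows "\<exists>a. h = (a, False) \<and> (int n dvd 2 * a \<longleftrightarrow> int n dvd 2 * i)"
proof -
  have "h = (i, False) \<or> h = ((- i) mod int n, False)" using conj_rot_iff[OF assms(1-3)] assms(4) by auto
  moreover have "int n dvd 2 * ((- i) mod int n) \<longleftrightarrow> int n dvd 2 * i"
  proof -
    have "(2 * ((- i) mod int n)) mod int n = (2 * (- i)) mod int n" by (metis mod_mult_right_eq)
    hence "int n dvd 2 * ((- i) mod int n) \<longleftrightarrow> int n dvd 2 * (- i)" by (simp add: dvd_eq_mod_eq_0)
    thus ?thesis by simp
  qed
  ultimately show ?thesis by auto
qed

lemma conj_self:
  assumes "n \<ge> 1" "g \<in> carrier (dihedral_group n)"
  shows "conjugate_in (dihedral_group n) g g"
proof -
  interpret group "dihedral_group n" by (rule dih_group[OF assms(1)])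
  show ?thesis unfolding conjugate_in_def using assms(2) by (intro bexI[of _ "\<one>\<^bsub>dihedral_group n\<^esub>"], auto)
qed

lemma adj_comm:
  assumes "n \<ge> 1" "g \<in> carrier (dihedral_group n)" "h \<in> carrier (dihedral_group n)" "g \<noteq> h"
    "g \<otimes>\<^bsub>dihedral_group n\<^esub> h = h \<otimes>\<^bsub>dihedral_group n\<^esub> g"
  shows "csc_adj (dihedral_group n) g h"
  unfolding csc_adj_def using assms conj_self[OF assms(1)] by blast

lemma adj_char:
  assumes n: "n \<ge> 1" and i: "0 \<le> i" "i < int n" and j: "0 \<le> j" "j < int n"
  shows "csc_adj (dihedral_group n) (i, s) (j, t) \<longleftrightarrow> (i, s) \<noteq> (j, t) \<and>
     ((\<not> s \<and> \<not> t) \<or> (\<not> s \<and> int n dvd 2 * i) \<or> (\<not> t \<and> int n dvd 2 * j) \<or>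
      (s \<and> t \<and> (odd n \<or> even (j - i) \<or> odd (n div 2))))"
    (is "?L \<longleftrightarrow> _ \<and> ?R")
proof (cases "(i, s) = (j, t)")
  case True
  thus ?thesis unfolding csc_adj_def by auto
next
  case ne: False
  have ci: "(i, s) \<in> carrier (dihedral_group n)" and cj: "(j, t) \<in> carrier (dihedral_group n)"
    using i j by (auto simp: dih_carrier)
  show ?thesis
  proof (cases s; cases t)
    assume s: "\<not> s" and t: "\<not> t"
    show ?thesis using adj_comm[OF n ci cj ne] s t comm_rot_rot ne by auto
  next
    assume s: "\<not> s" and t: "t"
    show ?thesis
    proof (cases "int n dvd 2 * i")
      case True
      thus ?thesis using adj_comm[OF n ci cj ne] s t comm_rot_refl ne by auto
    next
      case False
      have "\<not> ?L"
      proof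
        assume ?L
        moreover have "\<not> conjugate_in (dihedral_group n) (i, False) (j, True)"
          using conj_rot_iff[OF n i] by auto
        ultimately obtain g' h' where g': "conjugate_in (dihedral_group n) (i, False) g'"
          and h': "conjugate_in (dihedral_group n) (j, True) h'"
          and c: "g' \<otimes>\<^bsub>dihedral_group n\<^esub> h' = h' \<otimes>\<^bsub>dihedral_group n\<^esub> g'"
          unfolding csc_adj_def using s t by (simp only: not_False_eq_True simp_thms) blast
        obtain a where a: "g' = (a, False)" "int n dvd 2 * a \<longleftrightarrow> int n dvd 2 * i" using conj_rot_any[OF n i g'] by auto
        obtain b where b: "h' = (b, True)" using conj_refl_any[OF n j h'] by auto
        show False using c a b False comm_rot_refl by auto
      qed
      thus ?thesis using s t False by auto
    qed
  next
    assume s: "s" and t: "\<not> t"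
    show ?thesis
    proof (cases "int n dvd 2 * j")
      case True
      thus ?thesis using adj_comm[OF n ci cj ne] s t comm_refl_rot ne by auto
    next
      case False
      have "\<not> ?L"
      proof
        assume ?L
        moreover have "\<not> conjugate_in (dihedral_group n) (i, True) (j, False)"
          using conj_refl_iff[OF n i] by auto
        ultimately obtain g' h' where g': "conjugate_in (dihedral_group n) (i, True) g'"
          and h': "conjugate_in (dihedral_group n) (j, False) h'"
          and c: "g' \<otimes>\<^bsub>dihedral_group n\<^esub> h' = h' \<otimes>\<^bsub>dihedral_group n\<^esub> g'"
          unfolding csc_adj_def using s t by (simp only: not_False_eq_True simp_thms) blast
        obtain a where a: "h' = (a, False)" "int n dvd 2 * a \<longleftrightarrow> int n dvd 2 * j" using conj_rot_any[OF n j h'] by auto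
        obtain b where b: "g' = (b, True)" using conj_refl_any[OF n i g'] by auto
        show False using c a b False comm_refl_rot by auto
      qed
      thus ?thesis using s t False by auto
    qed
  next
    assume s: "s" and t: "t"
    show ?thesis
    proof (cases "odd n \<or> even (j - i)")
      case True
      hence "conjugate_in (dihedral_group n) (i, True) (j, True)" using conj_refl_refl_iff[OF n i j] by auto
      thus ?thesis using s t ne ci cj True unfolding csc_adj_def by auto
    next
      case False
      hence ev: "even n" and od: "odd (j - i)" by auto
      show ?thesis
      proof (cases "odd (n div 2)")
        case True
        define b where "b = (i + int (n div 2)) mod int n"
        have nn: "int n = 2 * int (n div 2)" using ev by auto
        have b0: "0 \<le> b" "b < int n" unfolding b_def using n by auto
        have "b = i + int (n div 2) - int n * ((i + int (n div 2)) div int n)" unfolding b_def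
          by (simp add: minus_div_mult_eq_mod[symmetric] algebra_simps)
        then obtain q where bq: "b = i + int (n div 2) - int n * q" by blast
        have "odd (int (n div 2))" using True by simp
        hence evb: "even (b - j)" using od unfolding bq nn by simp
        have hb: "conjugate_in (dihedral_group n) (j, True) (b, True)"
          using conj_refl_refl_iff[OF n j b0] evb by simp
        have cm: "(i, True) \<otimes>\<^bsub>dihedral_group n\<^esub> (b, True) = (b, True) \<otimes>\<^bsub>dihedral_group n\<^esub> (i, True)"
          unfolding comm_refl_refl bq nn by (simp add: algebra_simps)
        have "b \<noteq> i"
        proof
          assume "b = i"
          hence "int (n div 2) = int n * q" using bq by simp
          hence "int n dvd int (n div 2)" by simp
          moreover have "0 < int (n div 2)" "int (n div 2) < int n" using n nn by auto
          ultimately show False using zdvd_imp_le by fastforce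
        qed
        have st: "s = True" "t = True" using s t by auto
        have ex: "\<exists>g'\<in>carrier (dihedral_group n). \<exists>h'\<in>carrier (dihedral_group n). g' \<noteq> h' \<and>
            conjugate_in (dihedral_group n) (i, True) g' \<and> conjugate_in (dihedral_group n) (j, True) h' \<and>
            g' \<otimes>\<^bsub>dihedral_group n\<^esub> h' = h' \<otimes>\<^bsub>dihedral_group n\<^esub> g'"
        proof (rule bexI[of _ "(i, True)"], rule bexI[of _ "(b, True)"])
          show "(i, True) \<noteq> (b, True) \<and> conjugate_in (dihedral_group n) (i, True) (i, True) \<and>
            conjugate_in (dihedral_group n) (j, True) (b, True) \<and>
            (i, True) \<otimes>\<^bsub>dihedral_group n\<^esub> (b, True) = (b, True) \<otimes>\<^bsub>dihedral_group n\<^esub> (i, True)"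
            using \<open>b \<noteq> i\<close> hb cm conj_self[OF n ci] st by auto
          show "(b, True) \<in> carrier (dihedral_group n)" using b0 by (simp add: dih_carrier)
          show "(i, True) \<in> carrier (dihedral_group n)" using ci st by simp
        qed
        have "?L" unfolding csc_adj_def using ci cj ne ex st by auto
        thus ?thesis using True s t ne by auto
      next
        case False
        have "\<not> ?L"
        proof
          assume ?L
          moreover have "\<not> conjugate_in (dihedral_group n) (i, True) (j, True)"
            using conj_refl_refl_iff[OF n i j] ev od by auto
          ultimately obtain g' h' where g': "conjugate_in (dihedral_group n) (i, True) g'"
            and h': "conjugate_in (dihedral_group n) (j, True) h'"
            and c: "g' \<otimes>\<^bsub>dihedral_group n\<^esub> h' = h' \<otimes>\<^bsub>dihedral_group n\<^esub> g'"
            unfolding csc_adj_def using s t by (simp only: not_False_eq_True simp_thms) blast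
          obtain a where a: "g' = (a, True)" "even (a - i)" using conj_refl_any[OF n i g'] ev by auto
          obtain b where b: "h' = (b, True)" "even (b - j)" using conj_refl_any[OF n j h'] ev by auto
          have d: "int n dvd 2 * (a - b)" using c a b comm_refl_refl by auto
          obtain t' where t': "n div 2 = 2 * t'" using False by (auto elim: evenE)
          have "n = 2 * (n div 2)" using ev by simp
          hence "int n = 2 * (2 * int t')" using t' by simp
          hence "2 * (2 * int t') dvd 2 * (a - b)" using d by simp
          hence "2 * int t' dvd a - b" by (simp only: dvd_mult_cancel_left) simp
          hence "even (a - b)" by (rule dvd_mult_left)
          moreover have "odd (a - b)" using a(2) b(2) od by presburger
          ultimately show False by simp
        qed
        thus ?thesis using False s t ev od by auto
      qed
    qed
  qed
qed



lemma det1: assumes "A \<in> carrier_mat 1 1" shows "det A = A $$ (0,0)"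
  using det_single[OF assms] .

lemma det2: fixes A :: "'a :: comm_ring_1 mat" assumes A: "A \<in> carrier_mat 2 2"
  shows "det A = A $$ (0,0) * A $$ (1,1) - A $$ (0,1) * A $$ (1,0)"
proof -
  have "det A = (\<Sum>j<2. A $$ (0,j) * cofactor A 0 j)" by (rule laplace_expansion_row[OF A], simp)
  also have "\<dots> = A $$ (0,0) * cofactor A 0 0 + A $$ (0,1) * cofactor A 0 1"
    by (simp add: numeral_2_eq_2)
  also have "cofactor A 0 0 = A $$ (1,1)" unfolding cofactor_def
    using A by (subst det1, auto intro: mat_delete_carrier simp: mat_delete_def numeral_3_eq_3 numeral_2_eq_2)
  also have "cofactor A 0 1 = - A $$ (1,0)" unfolding cofactor_def
    using A by (subst det1, auto intro: mat_delete_carrier simp: mat_delete_def numeral_3_eq_3 numeral_2_eq_2)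
  finally show ?thesis by simp
qed

lemma det3: fixes A :: "'a :: comm_ring_1 mat" assumes A: "A \<in> carrier_mat 3 3"
  shows "det A = A $$ (0,0) * (A $$ (1,1) * A $$ (2,2) - A $$ (1,2) * A $$ (2,1))
               - A $$ (0,1) * (A $$ (1,0) * A $$ (2,2) - A $$ (1,2) * A $$ (2,0))
               + A $$ (0,2) * (A $$ (1,0) * A $$ (2,1) - A $$ (1,1) * A $$ (2,0))"
proof -
  have "det A = (\<Sum>j<3. A $$ (0,j) * cofactor A 0 j)" by (rule laplace_expansion_row[OF A], simp)
  also have "\<dots> = A $$ (0,0) * cofactor A 0 0 + A $$ (0,1) * cofactor A 0 1 + A $$ (0,2) * cofactor A 0 2"
    by (simp add: numeral_3_eq_3 numeral_2_eq_2)
  also have "cofactor A 0 0 = A $$ (1,1) * A $$ (2,2) - A $$ (1,2) * A $$ (2,1)" unfolding cofactor_def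
    using A by (subst det2, auto intro: mat_delete_carrier simp: mat_delete_def numeral_3_eq_3 numeral_2_eq_2)
  also have "cofactor A 0 1 = - (A $$ (1,0) * A $$ (2,2) - A $$ (1,2) * A $$ (2,0))" unfolding cofactor_def
    using A by (subst det2, auto intro: mat_delete_carrier simp: mat_delete_def numeral_3_eq_3 numeral_2_eq_2)
  also have "cofactor A 0 2 = A $$ (1,0) * A $$ (2,1) - A $$ (1,1) * A $$ (2,0)" unfolding cofactor_def
    using A by (subst det2, auto intro: mat_delete_carrier simp: mat_delete_def numeral_3_eq_3 numeral_2_eq_2)
  finally show ?thesis by (simp add: algebra_simps)
qed

definition "d3 a00 a01 a02 a10 a11 a12 a20 a21 a22 =
  a00 * (a11 * a22 - a12 * a21) - a01 * (a10 * a22 - a12 * a20) + a02 * (a10 * a21 - a11 * a20)"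

lemma det4: fixes A :: "'a :: comm_ring_1 mat" assumes A: "A \<in> carrier_mat 4 4"
  shows "det A = A $$ (0,0) * d3 (A $$ (1,1)) (A $$ (1,2)) (A $$ (1,3)) (A $$ (2,1)) (A $$ (2,2)) (A $$ (2,3)) (A $$ (3,1)) (A $$ (3,2)) (A $$ (3,3))
               - A $$ (0,1) * d3 (A $$ (1,0)) (A $$ (1,2)) (A $$ (1,3)) (A $$ (2,0)) (A $$ (2,2)) (A $$ (2,3)) (A $$ (3,0)) (A $$ (3,2)) (A $$ (3,3))
               + A $$ (0,2) * d3 (A $$ (1,0)) (A $$ (1,1)) (A $$ (1,3)) (A $$ (2,0)) (A $$ (2,1)) (A $$ (2,3)) (A $$ (3,0)) (A $$ (3,1)) (A $$ (3,3))
               - A $$ (0,3) * d3 (A $$ (1,0)) (A $$ (1,1)) (A $$ (1,2)) (A $$ (2,0)) (A $$ (2,1)) (A $$ (2,2)) (A $$ (3,0)) (A $$ (3,1)) (A $$ (3,2))"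
proof -
  have "det A = (\<Sum>j<4. A $$ (0,j) * cofactor A 0 j)" by (rule laplace_expansion_row[OF A], simp)
  also have "\<dots> = A $$ (0,0) * cofactor A 0 0 + A $$ (0,1) * cofactor A 0 1 + A $$ (0,2) * cofactor A 0 2 + A $$ (0,3) * cofactor A 0 3"
    by (simp add: numeral_3_eq_3 eval_nat_numeral)
  also have "cofactor A 0 0 = d3 (A $$ (1,1)) (A $$ (1,2)) (A $$ (1,3)) (A $$ (2,1)) (A $$ (2,2)) (A $$ (2,3)) (A $$ (3,1)) (A $$ (3,2)) (A $$ (3,3))" unfolding cofactor_def d3_def
    using A by (subst det3, auto intro: mat_delete_carrier simp: mat_delete_def numeral_3_eq_3 numeral_2_eq_2)
  also have "cofactor A 0 1 = - d3 (A $$ (1,0)) (A $$ (1,2)) (A $$ (1,3)) (A $$ (2,0)) (A $$ (2,2)) (A $$ (2,3)) (A $$ (3,0)) (A $$ (3,2)) (A $$ (3,3))" unfolding cofactor_def d3_def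
    using A by (subst det3, auto intro: mat_delete_carrier simp: mat_delete_def numeral_3_eq_3 numeral_2_eq_2)
  also have "cofactor A 0 2 = d3 (A $$ (1,0)) (A $$ (1,1)) (A $$ (1,3)) (A $$ (2,0)) (A $$ (2,1)) (A $$ (2,3)) (A $$ (3,0)) (A $$ (3,1)) (A $$ (3,3))" unfolding cofactor_def d3_def
    using A by (subst det3, auto intro: mat_delete_carrier simp: mat_delete_def numeral_3_eq_3 numeral_2_eq_2)
  also have "cofactor A 0 3 = - d3 (A $$ (1,0)) (A $$ (1,1)) (A $$ (1,2)) (A $$ (2,0)) (A $$ (2,1)) (A $$ (2,2)) (A $$ (3,0)) (A $$ (3,1)) (A $$ (3,2))" unfolding cofactor_def d3_def
    using A by (subst det3, auto intro: mat_delete_carrier simp: mat_delete_def numeral_3_eq_3 numeral_2_eq_2)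
  finally show ?thesis by (simp add: algebra_simps)
qed



lemma dv_length: "length (dihedral_vertices n) = 2 * n"
  by (simp add: dihedral_vertices_def)

lemma dv_nth: "k < 2 * n \<Longrightarrow> dihedral_vertices n ! k = (if k < n then (int k, False) else (int (k - n), True))"
  by (auto simp: dihedral_vertices_def nth_append)

lemma dv_distinct: "distinct (dihedral_vertices n)"
  by (auto simp: dihedral_vertices_def distinct_map inj_on_def)

lemma dv_set: "set (dihedral_vertices n) = carrier (dihedral_group n)"
proof -
  have "set (dihedral_vertices n) = (\<lambda>i. (int i, False)) ` {0..<n} \<union> (\<lambda>i. (int i, True)) ` {0..<n}"
    by (simp add: dihedral_vertices_def)
  also have "\<dots> = {0..<int n} \<times> UNIV"
  proof (rule Set.set_eqI)
    fix x :: "int \<times> bool"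
    obtain a s where x: "x = (a, s)" by (cases x)
    show "x \<in> (\<lambda>i. (int i, False)) ` {0..<n} \<union> (\<lambda>i. (int i, True)) ` {0..<n} \<longleftrightarrow> x \<in> {0..<int n} \<times> UNIV"
    proof
      assume "x \<in> {0..<int n} \<times> UNIV"
      hence "a = int (nat a)" "nat a < n" using x by auto
      hence "(a, s) = (\<lambda>i. (int i, s)) (nat a)" "nat a \<in> {0..<n}" by auto
      thus "x \<in> (\<lambda>i. (int i, False)) ` {0..<n} \<union> (\<lambda>i. (int i, True)) ` {0..<n}"
        unfolding x by (cases s) (simp_all only: image_eqI UnI1 UnI2)
    qed (auto simp: x)
  qed
  finally show ?thesis by (simp add: dih_carrier)
qed

lemma central_nat: assumes "k < n" shows "int n dvd 2 * int k \<longleftrightarrow> k = 0 \<or> 2 * k = n"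
proof
  assume "int n dvd 2 * int k"
  hence "n dvd 2 * k" by (metis of_nat_dvd_iff of_nat_mult of_nat_numeral)
  then obtain q where q: "2 * k = n * q" by (auto elim: dvdE)
  have "q < 2"
  proof (rule ccontr)
    assume "\<not> q < 2" hence "n * 2 \<le> n * q" by simp
    thus False using q assms by linarith
  qed
  hence "q = 0 \<or> q = 1" by auto
  thus "k = 0 \<or> 2 * k = n" using q by auto
next
  assume "k = 0 \<or> 2 * k = n"
  thus "int n dvd 2 * int k" by auto
qed

definition cls3 :: "nat \<Rightarrow> int \<times> bool \<Rightarrow> nat" where
  "cls3 n g = (if snd g then 2 else if int n dvd 2 * fst g then 0 else 1)"

definition badj3 :: "nat \<Rightarrow> nat \<Rightarrow> bool" where
  "badj3 b c \<longleftrightarrow> \<not> (b = 1 \<and> c = 2 \<or> b = 2 \<and> c = 1)"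

definition cls4 :: "nat \<Rightarrow> int \<times> bool \<Rightarrow> nat" where
  "cls4 n g = (if snd g then (if even (fst g) then 2 else 3) else if int n dvd 2 * fst g then 0 else 1)"

definition badj4 :: "nat \<Rightarrow> nat \<Rightarrow> bool" where
  "badj4 b c \<longleftrightarrow> \<not> (b = 1 \<and> 2 \<le> c \<or> 2 \<le> b \<and> c = 1 \<or> b = 2 \<and> c = 3 \<or> b = 3 \<and> c = 2)"

lemma adj3:
  assumes n: "n \<ge> 1" and o: "odd n \<or> odd (n div 2)"
    and g: "g \<in> carrier (dihedral_group n)" and h: "h \<in> carrier (dihedral_group n)"
  shows "csc_adj (dihedral_group n) g h \<longleftrightarrow> g \<noteq> h \<and> badj3 (cls3 n g) (cls3 n h)"
proof -
  obtain i s j t where gh: "g = (i, s)" "h = (j, t)" by (cases g, cases h)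
  have i: "0 \<le> i" "i < int n" and j: "0 \<le> j" "j < int n" using g h gh by (auto simp: dih_carrier)
  show ?thesis unfolding gh adj_char[OF n i j] cls3_def badj3_def using o by auto
qed

lemma adj4:
  assumes n: "n \<ge> 1" and o: "4 dvd n"
    and g: "g \<in> carrier (dihedral_group n)" and h: "h \<in> carrier (dihedral_group n)"
  shows "csc_adj (dihedral_group n) g h \<longleftrightarrow> g \<noteq> h \<and> badj4 (cls4 n g) (cls4 n h)"
proof -
  obtain i s j t where gh: "g = (i, s)" "h = (j, t)" by (cases g, cases h)
  have i: "0 \<le> i" "i < int n" and j: "0 \<le> j" "j < int n" using g h gh by (auto simp: dih_carrier)
  have ev: "even n" "even (n div 2)" using o by (auto elim!: dvdE)
  have par: "even (j - i) \<longleftrightarrow> (even i \<longleftrightarrow> even j)" by presburger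
  show ?thesis unfolding gh adj_char[OF n i j] cls4_def badj4_def using ev par by auto
qed



lemma sqrt_diag: "complex_of_real (sqrt (real d ^ 2 + real d ^ 2)) = of_nat d * complex_of_real (sqrt 2)"
proof -
  have "sqrt (real d ^ 2 + real d ^ 2) = sqrt 2 * real d"
    by (simp add: real_sqrt_mult flip: mult_2)
  thus ?thesis by simp
qed

lemma sqrt_off: "complex_of_real (sqrt (real a ^ 2 + real b ^ 2)) * complex_of_real (sqrt (real b ^ 2 + real a ^ 2))
   = of_nat a ^ 2 + of_nat b ^ 2"
proof -
  have "sqrt (real a ^ 2 + real b ^ 2) * sqrt (real b ^ 2 + real a ^ 2) = real a ^ 2 + real b ^ 2"
    by (simp add: add.commute)
  hence "complex_of_real (sqrt (real a ^ 2 + real b ^ 2) * sqrt (real b ^ 2 + real a ^ 2)) = complex_of_real (real a ^ 2 + real b ^ 2)"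
    by simp
  thus ?thesis by simp
qed

lemma case_odd:
  fixes n :: nat
  assumes n3: "n \<ge> 3" and odd: "odd n"
  defines "m \<equiv> (of_nat n :: complex)"
      and "r \<equiv> complex_of_real (sqrt 2)"
  shows "sombor_spectrum (dihedral_group n) (dihedral_vertices n) = replicate_mset (n - 2) (- (m - 1) * r) + replicate_mset (n - 1) (- m * r)
        + proots ([:0, 1:] * lin ((m - 1) * (m - 2) * r) * lin (m * (m - 1) * r)
            - Polynomial.smult ((m - 1) * (5 * m^2 - 6 * m + 2)) (lin (m * (m - 1) * r))
            - Polynomial.smult (m * (5 * m^2 - 4 * m + 1)) (lin ((m - 1) * (m - 2) * r)))"
proof -
  let ?G = "dihedral_group n" and ?vs = "dihedral_vertices n"
  define T where "T = [:0, 1:] * lin ((m - 1) * (m - 2) * r) * lin (m * (m - 1) * r)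
            - Polynomial.smult ((m - 1) * (5 * m^2 - 6 * m + 2)) (lin (m * (m - 1) * r))
            - Polynomial.smult (m * (5 * m^2 - 4 * m + 1)) (lin ((m - 1) * (m - 2) * r))"
  define sz where "sz b = (if b = 0 then 1 else if b = (1::nat) then n - 1 else n)" for b
  define dg where "dg b = (if b = 0 then 2 * n - 1 else if b = (1::nat) then n - 1 else n)" for b
  define C where "C b c = complex_of_real (if badj3 b c then sqrt (real (dg b)^2 + real (dg c)^2) else 0)" for b c
  have n1: "n \<ge> 1" using n3 by simp
  have clsk: "k < 2 * n \<Longrightarrow> cls3 n (?vs ! k) = (if k < n then (if k = 0 then 0 else 1) else 2)" for k
  proof -
    assume k: "k < 2 * n"
    have "k < n \<Longrightarrow> int n dvd 2 * int k \<longleftrightarrow> k = 0" using central_nat[of k n] odd by auto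
    thus ?thesis using k by (auto simp: dv_nth cls3_def)
  qed
  have cl0: "cls3 n (?vs ! 0) = 0" using clsk[of 0] n1 by simp
  have cl1: "0 < k \<Longrightarrow> k < n \<Longrightarrow> cls3 n (?vs ! k) = 1" for k using clsk[of k] by simp
  have cl2: "n \<le> k \<Longrightarrow> k < 2 * n \<Longrightarrow> cls3 n (?vs ! k) = 2" for k using clsk[of k] by simp
  have kk: "k < length ?vs \<and> cls3 n (?vs ! k) = b \<longleftrightarrow> k < 2 * n \<and> (if k < n then if k = 0 then 0 else 1 else 2) = b" for k b
  proof (cases "k < 2 * n")
    case True thus ?thesis using clsk[OF True] by (simp add: dv_length)
  next
    case False thus ?thesis by (simp add: dv_length)
  qed
  have szk: "card {k. k < length ?vs \<and> cls3 n (?vs ! k) = b} = sz b" if b: "b < 3" for b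
  proof -
    have S0: "{k. k < length ?vs \<and> cls3 n (?vs ! k) = 0} = {0}"
      unfolding kk using n1 by (intro Set.set_eqI) simp
    have S1: "{k. k < length ?vs \<and> cls3 n (?vs ! k) = 1} = {1..<n}"
      unfolding kk by (intro Set.set_eqI) auto
    have S2: "{k. k < length ?vs \<and> cls3 n (?vs ! k) = 2} = {n..<2*n}"
      unfolding kk by (intro Set.set_eqI) auto
    have "b = 0 \<or> b = 1 \<or> b = 2" using b by auto
    thus ?thesis
    proof (elim disjE)
      assume "b = 0" thus ?thesis by (simp only: S0) (simp add: sz_def)
    next
      assume "b = 1" thus ?thesis by (simp only: S1) (simp add: sz_def)
    next
      assume "b = 2" thus ?thesis by (simp only: S2) (simp add: sz_def)
    qed
  qed
  have sum3: "(\<Sum>c<3. f c) = f 0 + f 1 + f (2::nat)" for f :: "nat \<Rightarrow> nat"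
    by (simp add: numeral_3_eq_3 numeral_2_eq_2)
  have dgeq: "dg b = (\<Sum>c<3. if badj3 b c then sz c else 0) - 1" if "b < 3" for b
  proof -
    have "b = 0 \<or> b = 1 \<or> b = 2" using that by auto
    thus ?thesis unfolding sum3 using n3 by (elim disjE, simp_all add: dg_def sz_def badj3_def)
  qed
  have mn: "of_nat (n - 1) = m - 1" "of_nat (n - 2) = m - 2" "of_nat (2 * n - 1) = 2 * m - 1"
    using n3 by (auto simp: m_def of_nat_diff)
  have Cd: "C b b = of_nat (dg b) * r" for b unfolding C_def r_def
    using sqrt_diag[of "dg b"] by (simp add: badj3_def)
  have C11: "C 1 1 = (m - 1) * r" unfolding Cd using mn by (simp add: dg_def)
  have C22: "C 2 2 = m * r" unfolding Cd using mn by (simp add: dg_def m_def)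
  have C12: "C 1 2 = 0" "C 2 1 = 0" unfolding C_def by (auto simp: badj3_def)
  have Co: "badj3 b c \<Longrightarrow> C b c * C c b = of_nat (dg b) ^ 2 + of_nat (dg c) ^ 2" for b c
  proof -
    assume bc: "badj3 b c"
    hence cb: "badj3 c b" by (auto simp: badj3_def)
    show ?thesis unfolding C_def using bc cb sqrt_off[of "dg b" "dg c"] by (simp only: if_True)
  qed
  have C01: "C 0 1 * C 1 0 = (2 * m - 1)^2 + (m - 1)^2" using Co[of 0 1] mn
    by (simp add: badj3_def dg_def)
  have C02: "C 0 2 * C 2 0 = (2 * m - 1)^2 + m^2" using Co[of 0 2] mn
    by (simp add: badj3_def dg_def m_def)
  have Tdet: "det (mat 3 3 (\<lambda>(b,c). (if b = c then x + C b b else 0) - C b c * of_nat (sz c))) = poly T x" for x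
  proof -
    let ?M = "mat 3 3 (\<lambda>(b,c). (if b = c then x + C b b else 0) - C b c * of_nat (sz c))"
    have "det ?M = x * (x - C 1 1 * (m - 2)) * (x - C 2 2 * (m - 1))
        - (C 0 1 * C 1 0) * (m - 1) * (x - C 2 2 * (m - 1)) - (C 0 2 * C 2 0) * m * (x - C 1 1 * (m - 2))"
    proof -
      have D: "det ?M = ?M $$ (0,0) * (?M $$ (1,1) * ?M $$ (2,2) - ?M $$ (1,2) * ?M $$ (2,1))
               - ?M $$ (0,1) * (?M $$ (1,0) * ?M $$ (2,2) - ?M $$ (1,2) * ?M $$ (2,0))
               + ?M $$ (0,2) * (?M $$ (1,0) * ?M $$ (2,1) - ?M $$ (1,1) * ?M $$ (2,0))"
        by (rule det3) simp
      have s': "sz 0 = 1" "sz (Suc 0) = n - Suc 0" "sz 2 = n" by (simp_all add: sz_def)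
      have C12': "C (Suc 0) 2 = 0" "C 2 (Suc 0) = 0" using C12 by simp_all
      have mn': "complex_of_nat (n - Suc 0) = m - 1" "complex_of_nat n = m" using mn by (simp_all add: m_def)
      have e: "?M $$ (0,0) = x" "?M $$ (1,1) = x - C 1 1 * (m - 2)" "?M $$ (2,2) = x - C 2 2 * (m - 1)"
        "?M $$ (1,2) = 0" "?M $$ (2,1) = 0" "?M $$ (0,1) = - C 0 1 * (m - 1)" "?M $$ (1,0) = - C 1 0"
        "?M $$ (0,2) = - C 0 2 * m" "?M $$ (2,0) = - C 2 0"
        by (simp_all add: s' C12' mn' algebra_simps)
      show ?thesis unfolding D e by (simp add: algebra_simps)
    qed
    also have "\<dots> = poly T x" unfolding T_def C01 C02 C11 C22
      by (simp add: lin_def algebra_simps power2_eq_square)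
    finally show ?thesis .
  qed
  have "sombor_spectrum ?G ?vs = (\<Sum>b<3. replicate_mset (sz b - 1) (- C b b)) + proots T"
  proof (rule spectrum_block[where cls = "cls3 n" and badj = badj3 and dg = dg and C = C and sz = sz and T = T and p = 3])
    show "distinct ?vs" by (rule dv_distinct)
    show "set ?vs = carrier ?G" by (rule dv_set)
    show "cls3 n g < 3" for g by (simp add: cls3_def)
    show "g \<in> carrier ?G \<Longrightarrow> h \<in> carrier ?G \<Longrightarrow> csc_adj ?G g h \<longleftrightarrow> g \<noteq> h \<and> badj3 (cls3 n g) (cls3 n h)" for g h
      by (rule adj3[OF n1], use odd in auto)
    show "b < 3 \<Longrightarrow> badj3 b b" for b by (simp add: badj3_def)
    show "b < 3 \<Longrightarrow> card {i. i < length ?vs \<and> cls3 n (?vs ! i) = b} = sz b" for b by (rule szk)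
    show "b < 3 \<Longrightarrow> 1 \<le> sz b" for b using n3 by (auto simp: sz_def)
    show "b < 3 \<Longrightarrow> dg b = (\<Sum>c<3. if badj3 b c then sz c else 0) - 1" for b by (rule dgeq)
    show "C b c = complex_of_real (if badj3 b c then sqrt (real (dg b)^2 + real (dg c)^2) else 0)" for b c
      by (rule C_def)
    show "det (mat 3 3 (\<lambda>(b,c). (if b = c then x + C b b else 0) - C b c * of_nat (sz c))) = poly T x" for x
      by (rule Tdet)
  qed
  also have "(\<Sum>b<3. replicate_mset (sz b - 1) (- C b b)) = replicate_mset (n - 2) (- (m - 1) * r) + replicate_mset (n - 1) (- m * r)"
  proof -
    have SE: "(\<Sum>b<3. replicate_mset (sz b - 1) (- C b b)) = replicate_mset (sz 0 - 1) (- C 0 0) + replicate_mset (sz 1 - 1) (- C 1 1) + replicate_mset (sz 2 - 1) (- C 2 2)"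
      by (simp add: numeral_3_eq_3 numeral_2_eq_2 add_ac)
    have ss: "sz 0 - 1 = 0" "sz 1 - 1 = n - 2" "sz 2 - 1 = n - 1" by (simp_all add: sz_def)
    show ?thesis unfolding SE ss C11 C22 by (simp add: algebra_simps)
  qed
  finally show ?thesis unfolding T_def .
qed



lemma case_2mod4:
  fixes n :: nat
  assumes n3: "n \<ge> 3" and ev: "even n" and odd: "odd (n div 2)"
  defines "m \<equiv> (of_nat n :: complex)"
      and "r \<equiv> complex_of_real (sqrt 2)"
  shows "sombor_spectrum (dihedral_group n) (dihedral_vertices n) = replicate_mset (n - 1) (- (m + 1) * r) + replicate_mset (n - 3) (- (m - 1) * r)
        + {# - (2 * m - 1) * r #}
        + proots (lin ((2 * m - 1) * r) * lin ((m - 1) * (m + 1) * r) * lin ((m - 1) * (m - 3) * r)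
            - Polynomial.smult (2 * (m - 2) * (5 * m^2 - 6 * m + 2)) (lin ((m - 1) * (m + 1) * r))
            - Polynomial.smult (2 * m * (5 * m^2 - 2 * m + 2)) (lin ((m - 1) * (m - 3) * r)))"
proof -
  let ?G = "dihedral_group n" and ?vs = "dihedral_vertices n"
  define T where "T = lin ((2 * m - 1) * r) * lin ((m - 1) * (m + 1) * r) * lin ((m - 1) * (m - 3) * r)
            - Polynomial.smult (2 * (m - 2) * (5 * m^2 - 6 * m + 2)) (lin ((m - 1) * (m + 1) * r))
            - Polynomial.smult (2 * m * (5 * m^2 - 2 * m + 2)) (lin ((m - 1) * (m - 3) * r))"
  define sz where "sz b = (if b = 0 then 2 else if b = (1::nat) then n - 2 else n)" for b
  define dg where "dg b = (if b = 0 then 2 * n - 1 else if b = (1::nat) then n - 1 else n + 1)" for b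
  define C where "C b c = complex_of_real (if badj3 b c then sqrt (real (dg b)^2 + real (dg c)^2) else 0)" for b c
  have n1: "n \<ge> 1" using n3 by simp
  have n6: "n \<ge> 6"
  proof -
    have "n \<noteq> 4" using odd by auto
    thus ?thesis using n3 ev by presburger
  qed
  have half: "2 * k = n \<longleftrightarrow> k = n div 2" for k using ev by auto
  have clsk: "k < 2 * n \<Longrightarrow> cls3 n (?vs ! k) = (if k < n then (if k = 0 \<or> k = n div 2 then 0 else 1) else 2)" for k
  proof -
    assume k: "k < 2 * n"
    have "k < n \<Longrightarrow> int n dvd 2 * int k \<longleftrightarrow> k = 0 \<or> k = n div 2" using central_nat[of k n] half by auto
    thus ?thesis using k by (auto simp: dv_nth cls3_def)
  qed
  have kk: "k < length ?vs \<and> cls3 n (?vs ! k) = b \<longleftrightarrow> k < 2 * n \<and> (if k < n then if k = 0 \<or> k = n div 2 then 0 else 1 else 2) = b" for k b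
  proof (cases "k < 2 * n")
    case True thus ?thesis using clsk[OF True] by (simp add: dv_length)
  next
    case False thus ?thesis by (simp add: dv_length)
  qed
  have szk: "card {k. k < length ?vs \<and> cls3 n (?vs ! k) = b} = sz b" if b: "b < 3" for b
  proof -
    have S0: "{k. k < length ?vs \<and> cls3 n (?vs ! k) = 0} = {0, n div 2}"
      unfolding kk using n1 by (intro Set.set_eqI) auto
    have S1: "{k. k < length ?vs \<and> cls3 n (?vs ! k) = 1} = {1..<n} - {n div 2}"
      unfolding kk by (intro Set.set_eqI) auto
    have S2: "{k. k < length ?vs \<and> cls3 n (?vs ! k) = 2} = {n..<2*n}"
      unfolding kk by (intro Set.set_eqI) auto
    have "b = 0 \<or> b = 1 \<or> b = 2" using b by auto
    thus ?thesis
    proof (elim disjE)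
      assume "b = 0" thus ?thesis using n6 by (simp only: S0) (simp add: sz_def)
    next
      assume "b = 1" thus ?thesis using n6 by (simp only: S1) (simp add: sz_def card_Diff_singleton)
    next
      assume "b = 2" thus ?thesis by (simp only: S2) (simp add: sz_def)
    qed
  qed
  have sum3: "(\<Sum>c<3. f c) = f 0 + f 1 + f (2::nat)" for f :: "nat \<Rightarrow> nat"
    by (simp add: numeral_3_eq_3 numeral_2_eq_2)
  have dgeq: "dg b = (\<Sum>c<3. if badj3 b c then sz c else 0) - 1" if "b < 3" for b
  proof -
    have "b = 0 \<or> b = 1 \<or> b = 2" using that by auto
    thus ?thesis unfolding sum3 using n3 by (elim disjE, simp_all add: dg_def sz_def badj3_def)
  qed
  have mn: "of_nat (n - 1) = m - 1" "of_nat (n - 2) = m - 2" "of_nat (2 * n - 1) = 2 * m - 1" "of_nat (n + 1) = m + 1"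
    using n3 by (auto simp: m_def of_nat_diff)
  have Cd: "C b b = of_nat (dg b) * r" for b unfolding C_def r_def
    using sqrt_diag[of "dg b"] by (simp add: badj3_def)
  have C00: "C 0 0 = (2 * m - 1) * r" unfolding Cd using mn by (simp add: dg_def)
  have C11: "C 1 1 = (m - 1) * r" unfolding Cd using mn by (simp add: dg_def)
  have C22: "C 2 2 = (m + 1) * r" unfolding Cd using mn by (simp add: dg_def)
  have C12: "C 1 2 = 0" "C 2 1 = 0" unfolding C_def by (auto simp: badj3_def)
  have Co: "badj3 b c \<Longrightarrow> C b c * C c b = of_nat (dg b) ^ 2 + of_nat (dg c) ^ 2" for b c
  proof -
    assume bc: "badj3 b c"
    hence cb: "badj3 c b" by (auto simp: badj3_def)
    show ?thesis unfolding C_def using bc cb sqrt_off[of "dg b" "dg c"] by (simp only: if_True)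
  qed
  have C01: "C 0 1 * C 1 0 = (2 * m - 1)^2 + (m - 1)^2" using Co[of 0 1] mn
    by (simp add: badj3_def dg_def)
  have C02: "C 0 2 * C 2 0 = (2 * m - 1)^2 + (m + 1)^2" using Co[of 0 2] mn
    by (simp add: badj3_def dg_def add.commute)
  have Tdet: "det (mat 3 3 (\<lambda>(b,c). (if b = c then x + C b b else 0) - C b c * of_nat (sz c))) = poly T x" for x
  proof -
    let ?M = "mat 3 3 (\<lambda>(b,c). (if b = c then x + C b b else 0) - C b c * of_nat (sz c))"
    have "det ?M = (x - C 0 0) * (x - C 1 1 * (m - 3)) * (x - C 2 2 * (m - 1))
        - (C 0 1 * C 1 0) * 2 * (m - 2) * (x - C 2 2 * (m - 1)) - (C 0 2 * C 2 0) * 2 * m * (x - C 1 1 * (m - 3))"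
    proof -
      have D: "det ?M = ?M $$ (0,0) * (?M $$ (1,1) * ?M $$ (2,2) - ?M $$ (1,2) * ?M $$ (2,1))
               - ?M $$ (0,1) * (?M $$ (1,0) * ?M $$ (2,2) - ?M $$ (1,2) * ?M $$ (2,0))
               + ?M $$ (0,2) * (?M $$ (1,0) * ?M $$ (2,1) - ?M $$ (1,1) * ?M $$ (2,0))"
        by (rule det3) simp
      have s': "sz 0 = 2" "sz (Suc 0) = n - 2" "sz 2 = n" by (simp_all add: sz_def)
      have C12': "C (Suc 0) 2 = 0" "C 2 (Suc 0) = 0" using C12 by simp_all
      have mn': "complex_of_nat (n - 2) = m - 2" "complex_of_nat n = m" using mn by (simp_all add: m_def)
      have e: "?M $$ (0,0) = x - C 0 0" "?M $$ (1,1) = x - C 1 1 * (m - 3)" "?M $$ (2,2) = x - C 2 2 * (m - 1)"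
        "?M $$ (1,2) = 0" "?M $$ (2,1) = 0" "?M $$ (0,1) = - C 0 1 * (m - 2)" "?M $$ (1,0) = - C 1 0 * 2"
        "?M $$ (0,2) = - C 0 2 * m" "?M $$ (2,0) = - C 2 0 * 2"
        by (simp_all add: s' C12' mn' algebra_simps)
      show ?thesis unfolding D e by (simp add: algebra_simps)
    qed
    also have "\<dots> = poly T x" unfolding T_def C01 C02 C00 C11 C22
      by (simp add: lin_def algebra_simps power2_eq_square)
    finally show ?thesis .
  qed
  have "sombor_spectrum ?G ?vs = (\<Sum>b<3. replicate_mset (sz b - 1) (- C b b)) + proots T"
  proof (rule spectrum_block[where cls = "cls3 n" and badj = badj3 and dg = dg and C = C and sz = sz and T = T and p = 3])
    show "distinct ?vs" by (rule dv_distinct)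
    show "set ?vs = carrier ?G" by (rule dv_set)
    show "cls3 n g < 3" for g by (simp add: cls3_def)
    show "g \<in> carrier ?G \<Longrightarrow> h \<in> carrier ?G \<Longrightarrow> csc_adj ?G g h \<longleftrightarrow> g \<noteq> h \<and> badj3 (cls3 n g) (cls3 n h)" for g h
      by (rule adj3[OF n1], use odd in auto)
    show "b < 3 \<Longrightarrow> badj3 b b" for b by (simp add: badj3_def)
    show "b < 3 \<Longrightarrow> card {i. i < length ?vs \<and> cls3 n (?vs ! i) = b} = sz b" for b by (rule szk)
    show "b < 3 \<Longrightarrow> 1 \<le> sz b" for b using n3 by (auto simp: sz_def)
    show "b < 3 \<Longrightarrow> dg b = (\<Sum>c<3. if badj3 b c then sz c else 0) - 1" for b by (rule dgeq)
    show "C b c = complex_of_real (if badj3 b c then sqrt (real (dg b)^2 + real (dg c)^2) else 0)" for b c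
      by (rule C_def)
    show "det (mat 3 3 (\<lambda>(b,c). (if b = c then x + C b b else 0) - C b c * of_nat (sz c))) = poly T x" for x
      by (rule Tdet)
  qed
  also have "(\<Sum>b<3. replicate_mset (sz b - 1) (- C b b)) = replicate_mset (n - 1) (- (m + 1) * r) + replicate_mset (n - 3) (- (m - 1) * r)
        + {# - (2 * m - 1) * r #}"
  proof -
    have SE: "(\<Sum>b<3. replicate_mset (sz b - 1) (- C b b)) = replicate_mset (sz 0 - 1) (- C 0 0) + replicate_mset (sz 1 - 1) (- C 1 1) + replicate_mset (sz 2 - 1) (- C 2 2)"
      by (simp add: numeral_3_eq_3 numeral_2_eq_2 add_ac)
    have ss: "sz 0 - 1 = 1" "sz 1 - 1 = n - 3" "sz 2 - 1 = n - 1" by (simp_all add: sz_def)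
    show ?thesis unfolding SE ss C00 C11 C22 by (simp add: algebra_simps add_ac)
  qed
  finally show ?thesis unfolding T_def .
qed



lemma replicate_mset_add: "replicate_mset (a + b) x = replicate_mset a x + replicate_mset b x"
  by (induct a) auto

lemma evens_img:
  fixes n h k :: nat
  assumes "n = 2 * h"
  shows "k \<in> (\<lambda>j. n + 2 * j) ` {..<h} \<longleftrightarrow> n \<le> k \<and> k < 2 * n \<and> even (k - n)"
proof
  assume "n \<le> k \<and> k < 2 * n \<and> even (k - n)"
  hence k: "n \<le> k" "k < 2 * n" "even (k - n)" by auto
  have "k = n + 2 * ((k - n) div 2)" using k by simp
  moreover have "(k - n) div 2 < h" using k assms by simp
  ultimately show "k \<in> (\<lambda>j. n + 2 * j) ` {..<h}" by blast
qed (use assms in auto)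

lemma odds_img:
  fixes n h k :: nat
  assumes "n = 2 * h"
  shows "k \<in> (\<lambda>j. n + 2 * j + 1) ` {..<h} \<longleftrightarrow> n \<le> k \<and> k < 2 * n \<and> odd (k - n)"
proof
  assume "n \<le> k \<and> k < 2 * n \<and> odd (k - n)"
  hence k: "n \<le> k" "k < 2 * n" "odd (k - n)" by auto
  have "k = n + 2 * ((k - n) div 2) + 1" using k by presburger
  moreover have "(k - n) div 2 < h" using k assms by simp
  ultimately show "k \<in> (\<lambda>j. n + 2 * j + 1) ` {..<h}" by blast
next
  assume "k \<in> (\<lambda>j. n + 2 * j + 1) ` {..<h}"
  then obtain j where "j < h" "k = n + 2 * j + 1" by auto
  thus "n \<le> k \<and> k < 2 * n \<and> odd (k - n)" using assms by auto
qed

lemma case_4dvd: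
  fixes n :: nat
  assumes n3: "n \<ge> 3" and four: "4 dvd n"
  defines "m \<equiv> (of_nat n :: complex)"
      and "r \<equiv> complex_of_real (sqrt 2)"
  shows "sombor_spectrum (dihedral_group n) (dihedral_vertices n) = replicate_mset (n - 2) (- (m / 2 + 1) * r) + replicate_mset (n - 3) (- (m - 1) * r)
        + {# - (2 * m - 1) * r #}
        + proots (lin ((2 * m - 1) * r) * lin ((m - 1) * (m - 3) * r) * lin ((m / 2 - 1) * (m / 2 + 1) * r) ^ 2
            - Polynomial.smult (2 * (m - 2) * (5 * m^2 - 6 * m + 2)) (lin ((m / 2 - 1) * (m / 2 + 1) * r) ^ 2)
            - Polynomial.smult (2 * m * ((2 * m - 1)^2 + (m / 2 + 1)^2))
                (lin ((m - 3) * (m - 1) * r) * lin ((m / 2 - 1) * (m / 2 + 1) * r)))"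
proof -
  let ?G = "dihedral_group n" and ?vs = "dihedral_vertices n"
  define h where "h = n div 2"
  define H where "H = (of_nat h :: complex)"
  have nh: "n = 2 * h" using four unfolding h_def by (auto elim!: dvdE)
  have h2: "h \<ge> 2" using nh n3 four by (auto elim!: dvdE)
  have mH: "m = 2 * H" unfolding m_def H_def nh by simp
  have m2: "m / 2 = H" unfolding mH by simp
  define q where "q = (H - 1) * (H + 1) * r"
  define T where "T = lin ((2 * m - 1) * r) * lin ((m - 1) * (m - 3) * r) * lin q ^ 2
            - Polynomial.smult (2 * (m - 2) * (5 * m^2 - 6 * m + 2)) (lin q ^ 2)
            - Polynomial.smult (2 * m * ((2 * m - 1)^2 + (H + 1)^2))
                (lin ((m - 3) * (m - 1) * r) * lin q)"
  define sz where "sz b = (if b = 0 then 2 else if b = (1::nat) then n - 2 else h)" for b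
  define dg where "dg b = (if b = 0 then 2 * n - 1 else if b = (1::nat) then n - 1 else h + 1)" for b
  define C where "C b c = complex_of_real (if badj4 b c then sqrt (real (dg b)^2 + real (dg c)^2) else 0)" for b c
  have n1: "n \<ge> 1" using n3 by simp
  have half: "2 * k = n \<longleftrightarrow> k = h" for k using nh by auto
  have clsk: "k < 2 * n \<Longrightarrow> cls4 n (?vs ! k) = (if k < n then (if k = 0 \<or> k = h then 0 else 1) else if even (k - n) then 2 else 3)" for k
  proof -
    assume k: "k < 2 * n"
    have "k < n \<Longrightarrow> int n dvd 2 * int k \<longleftrightarrow> k = 0 \<or> k = h" using central_nat[of k n] half by auto
    moreover have "\<not> k < n \<Longrightarrow> even (int (k - n)) \<longleftrightarrow> even (k - n)" by simp
    ultimately show ?thesis using k by (auto simp: dv_nth cls4_def)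
  qed
  have kk: "k < length ?vs \<and> cls4 n (?vs ! k) = b \<longleftrightarrow> k < 2 * n \<and>
     (if k < n then (if k = 0 \<or> k = h then 0 else 1) else if even (k - n) then 2 else 3) = b" for k b
  proof (cases "k < 2 * n")
    case True thus ?thesis using clsk[OF True] by (simp add: dv_length)
  next
    case False thus ?thesis by (simp add: dv_length)
  qed
  have szk: "card {k. k < length ?vs \<and> cls4 n (?vs ! k) = b} = sz b" if b: "b < 4" for b
  proof -
    have S0: "{k. k < length ?vs \<and> cls4 n (?vs ! k) = 0} = {0, h}"
      unfolding kk using nh h2 by (intro Set.set_eqI) auto
    have S1: "{k. k < length ?vs \<and> cls4 n (?vs ! k) = 1} = {1..<n} - {h}"
      unfolding kk by (intro Set.set_eqI) auto
    have S2: "{k. k < length ?vs \<and> cls4 n (?vs ! k) = 2} = (\<lambda>j. n + 2 * j) ` {..<h}"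
    proof (intro Set.set_eqI)
      fix k show "k \<in> {k. k < length ?vs \<and> cls4 n (?vs ! k) = 2} \<longleftrightarrow> k \<in> (\<lambda>j. n + 2 * j) ` {..<h}"
        unfolding mem_Collect_eq kk evens_img[OF nh] by auto
    qed
    have S3: "{k. k < length ?vs \<and> cls4 n (?vs ! k) = 3} = (\<lambda>j. n + 2 * j + 1) ` {..<h}"
    proof (intro Set.set_eqI)
      fix k show "k \<in> {k. k < length ?vs \<and> cls4 n (?vs ! k) = 3} \<longleftrightarrow> k \<in> (\<lambda>j. n + 2 * j + 1) ` {..<h}"
        unfolding mem_Collect_eq kk odds_img[OF nh] by auto
    qed
    have "b = 0 \<or> b = 1 \<or> b = 2 \<or> b = 3" using b by auto
    thus ?thesis
    proof (elim disjE)
      assume "b = 0" thus ?thesis using h2 by (simp only: S0) (simp add: sz_def)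
    next
      have hn: "1 \<le> h" "h < n" using h2 nh by auto
      assume "b = 1" thus ?thesis using hn by (simp only: S1) (simp add: sz_def card_Diff_singleton)
    next
      assume "b = 2" thus ?thesis by (simp only: S2) (simp add: sz_def card_image inj_on_def)
    next
      assume "b = 3" thus ?thesis by (simp only: S3) (simp add: sz_def card_image inj_on_def)
    qed
  qed
  have sum4: "(\<Sum>c<4. f c) = f 0 + f 1 + f 2 + f (3::nat)" for f :: "nat \<Rightarrow> nat"
    by (simp add: numeral_3_eq_3 numeral_2_eq_2 eval_nat_numeral)
  have dgeq: "dg b = (\<Sum>c<4. if badj4 b c then sz c else 0) - 1" if "b < 4" for b
  proof -
    have "b = 0 \<or> b = 1 \<or> b = 2 \<or> b = 3" using that by auto
    thus ?thesis unfolding sum4 using h2 nh by (elim disjE, simp_all add: dg_def sz_def badj4_def)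
  qed
  have mn: "of_nat (n - 1) = m - 1" "of_nat (n - 2) = m - 2" "of_nat (2 * n - 1) = 2 * m - 1" "of_nat (h + 1) = H + 1"
     "of_nat (h - 1) = H - 1"
    using n3 h2 by (auto simp: m_def H_def of_nat_diff)
  have Cd: "C b b = of_nat (dg b) * r" for b unfolding C_def r_def
    using sqrt_diag[of "dg b"] by (simp add: badj4_def)
  have C00: "C 0 0 = (2 * m - 1) * r" unfolding Cd using mn by (simp add: dg_def)
  have C11: "C 1 1 = (m - 1) * r" unfolding Cd using mn by (simp add: dg_def)
  have C22: "C 2 2 = (H + 1) * r" unfolding Cd using mn by (simp add: dg_def)
  have C33: "C 3 3 = (H + 1) * r" unfolding Cd using mn by (simp add: dg_def)
  have Cz: "C 1 2 = 0" "C 2 1 = 0" "C 1 3 = 0" "C 3 1 = 0" "C 2 3 = 0" "C 3 2 = 0"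
    unfolding C_def by (auto simp: badj4_def)
  have Co: "badj4 b c \<Longrightarrow> C b c * C c b = of_nat (dg b) ^ 2 + of_nat (dg c) ^ 2" for b c
  proof -
    assume bc: "badj4 b c"
    hence cb: "badj4 c b" by (auto simp: badj4_def)
    show ?thesis unfolding C_def using bc cb sqrt_off[of "dg b" "dg c"] by (simp only: if_True)
  qed
  have C01: "C 0 1 * C 1 0 = (2 * m - 1)^2 + (m - 1)^2" using Co[of 0 1] mn
    by (simp add: badj4_def dg_def)
  have C02: "C 0 2 * C 2 0 = (2 * m - 1)^2 + (H + 1)^2" using Co[of 0 2] mn
    by (simp add: badj4_def dg_def add.commute)
  have C03: "C 0 3 * C 3 0 = (2 * m - 1)^2 + (H + 1)^2" using Co[of 0 3] mn
    by (simp add: badj4_def dg_def add.commute)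
  have Tdet: "det (mat 4 4 (\<lambda>(b,c). (if b = c then x + C b b else 0) - C b c * of_nat (sz c))) = poly T x" for x
  proof -
    let ?M = "mat 4 4 (\<lambda>(b,c). (if b = c then x + C b b else 0) - C b c * of_nat (sz c))"
    have "det ?M = (x - C 0 0) * (x - C 1 1 * (m - 3)) * (x - C 2 2 * (H - 1)) * (x - C 3 3 * (H - 1))
        - (C 0 1 * C 1 0) * 2 * (m - 2) * (x - C 2 2 * (H - 1)) * (x - C 3 3 * (H - 1))
        - (C 0 2 * C 2 0) * 2 * H * (x - C 1 1 * (m - 3)) * (x - C 3 3 * (H - 1))
        - (C 0 3 * C 3 0) * 2 * H * (x - C 1 1 * (m - 3)) * (x - C 2 2 * (H - 1))"
    proof -
      have D: "det ?M = ?M $$ (0,0) * d3 (?M $$ (1,1)) (?M $$ (1,2)) (?M $$ (1,3)) (?M $$ (2,1)) (?M $$ (2,2)) (?M $$ (2,3)) (?M $$ (3,1)) (?M $$ (3,2)) (?M $$ (3,3))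
               - ?M $$ (0,1) * d3 (?M $$ (1,0)) (?M $$ (1,2)) (?M $$ (1,3)) (?M $$ (2,0)) (?M $$ (2,2)) (?M $$ (2,3)) (?M $$ (3,0)) (?M $$ (3,2)) (?M $$ (3,3))
               + ?M $$ (0,2) * d3 (?M $$ (1,0)) (?M $$ (1,1)) (?M $$ (1,3)) (?M $$ (2,0)) (?M $$ (2,1)) (?M $$ (2,3)) (?M $$ (3,0)) (?M $$ (3,1)) (?M $$ (3,3))
               - ?M $$ (0,3) * d3 (?M $$ (1,0)) (?M $$ (1,1)) (?M $$ (1,2)) (?M $$ (2,0)) (?M $$ (2,1)) (?M $$ (2,2)) (?M $$ (3,0)) (?M $$ (3,1)) (?M $$ (3,2))"
        by (rule det4) simp
      have s': "sz 0 = 2" "sz (Suc 0) = n - 2" "sz 2 = h" "sz 3 = h" by (simp_all add: sz_def)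
      have Cz': "C (Suc 0) 2 = 0" "C 2 (Suc 0) = 0" "C (Suc 0) 3 = 0" "C 3 (Suc 0) = 0" "C 2 3 = 0" "C 3 2 = 0"
        using Cz by simp_all
      have mn': "complex_of_nat (n - 2) = m - 2" "complex_of_nat h = H" using mn by (simp_all add: H_def)
      have e: "?M $$ (0,0) = x - C 0 0" "?M $$ (1,1) = x - C 1 1 * (m - 3)" "?M $$ (2,2) = x - C 2 2 * (H - 1)"
        "?M $$ (3,3) = x - C 3 3 * (H - 1)"
        "?M $$ (1,2) = 0" "?M $$ (2,1) = 0" "?M $$ (1,3) = 0" "?M $$ (3,1) = 0" "?M $$ (2,3) = 0" "?M $$ (3,2) = 0"
        "?M $$ (0,1) = - C 0 1 * (m - 2)" "?M $$ (1,0) = - C 1 0 * 2"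
        "?M $$ (0,2) = - C 0 2 * H" "?M $$ (2,0) = - C 2 0 * 2"
        "?M $$ (0,3) = - C 0 3 * H" "?M $$ (3,0) = - C 3 0 * 2"
        by (simp_all add: s' Cz' mn' algebra_simps)
      show ?thesis unfolding D e d3_def by (simp add: algebra_simps)
    qed
    also have "\<dots> = poly T x" unfolding T_def C01 C02 C03 C00 C11 C22 C33 q_def
      by (simp add: lin_def algebra_simps power2_eq_square mH)
    finally show ?thesis .
  qed
  have "sombor_spectrum ?G ?vs = (\<Sum>b<4. replicate_mset (sz b - 1) (- C b b)) + proots T"
  proof (rule spectrum_block[where cls = "cls4 n" and badj = badj4 and dg = dg and C = C and sz = sz and T = T and p = 4])
    show "distinct ?vs" by (rule dv_distinct)
    show "set ?vs = carrier ?G" by (rule dv_set)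
    show "cls4 n g < 4" for g by (simp add: cls4_def)
    show "g \<in> carrier ?G \<Longrightarrow> h \<in> carrier ?G \<Longrightarrow> csc_adj ?G g h \<longleftrightarrow> g \<noteq> h \<and> badj4 (cls4 n g) (cls4 n h)" for g h
      by (rule adj4[OF n1 four])
    show "b < 4 \<Longrightarrow> badj4 b b" for b by (simp add: badj4_def)
    show "b < 4 \<Longrightarrow> card {i. i < length ?vs \<and> cls4 n (?vs ! i) = b} = sz b" for b by (rule szk)
    show "b < 4 \<Longrightarrow> 1 \<le> sz b" for b using n3 h2 by (auto simp: sz_def)
    show "b < 4 \<Longrightarrow> dg b = (\<Sum>c<4. if badj4 b c then sz c else 0) - 1" for b by (rule dgeq)
    show "C b c = complex_of_real (if badj4 b c then sqrt (real (dg b)^2 + real (dg c)^2) else 0)" for b c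
      by (rule C_def)
    show "det (mat 4 4 (\<lambda>(b,c). (if b = c then x + C b b else 0) - C b c * of_nat (sz c))) = poly T x" for x
      by (rule Tdet)
  qed
  also have "(\<Sum>b<4. replicate_mset (sz b - 1) (- C b b)) = replicate_mset (n - 2) (- (m / 2 + 1) * r) + replicate_mset (n - 3) (- (m - 1) * r)
        + {# - (2 * m - 1) * r #}"
  proof -
    have SE: "(\<Sum>b<4. replicate_mset (sz b - 1) (- C b b)) = replicate_mset (sz 0 - 1) (- C 0 0) + replicate_mset (sz 1 - 1) (- C 1 1)
       + replicate_mset (sz 2 - 1) (- C 2 2) + replicate_mset (sz 3 - 1) (- C 3 3)"
      by (simp add: numeral_3_eq_3 numeral_2_eq_2 eval_nat_numeral add_ac)
    have ss: "sz 0 - 1 = 1" "sz 1 - 1 = n - 3" "sz 2 - 1 = h - 1" "sz 3 - 1 = h - 1" by (simp_all add: sz_def)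
    have n2: "n - 2 = (h - 1) + (h - 1)" using nh h2 by simp
    show ?thesis unfolding SE ss C00 C11 C22 C33 n2 replicate_mset_add m2 by (simp add: algebra_simps add_ac)
  qed
  finally show ?thesis unfolding T_def q_def m2 .
qed

theorem corollary4p9:
  fixes n :: nat
  assumes "n \<ge> 3"
  defines "m \<equiv> (of_nat n :: complex)"
      and "r \<equiv> complex_of_real (sqrt 2)"
      and "Spec \<equiv> sombor_spectrum (dihedral_group n) (dihedral_vertices n)"
  shows
   "(odd n \<longrightarrow>
      Spec = replicate_mset (n - 2) (- (m - 1) * r) + replicate_mset (n - 1) (- m * r)
        + proots ([:0, 1:] * lin ((m - 1) * (m - 2) * r) * lin (m * (m - 1) * r)
            - Polynomial.smult ((m - 1) * (5 * m^2 - 6 * m + 2)) (lin (m * (m - 1) * r))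
            - Polynomial.smult (m * (5 * m^2 - 4 * m + 1)) (lin ((m - 1) * (m - 2) * r)))) \<and>
    (even n \<and> odd (n div 2) \<longrightarrow>
      Spec = replicate_mset (n - 1) (- (m + 1) * r) + replicate_mset (n - 3) (- (m - 1) * r)
        + {# - (2 * m - 1) * r #}
        + proots (lin ((2 * m - 1) * r) * lin ((m - 1) * (m + 1) * r) * lin ((m - 1) * (m - 3) * r)
            - Polynomial.smult (2 * (m - 2) * (5 * m^2 - 6 * m + 2)) (lin ((m - 1) * (m + 1) * r))
            - Polynomial.smult (2 * m * (5 * m^2 - 2 * m + 2)) (lin ((m - 1) * (m - 3) * r)))) \<and>
    (4 dvd n \<longrightarrow>
      Spec = replicate_mset (n - 2) (- (m / 2 + 1) * r) + replicate_mset (n - 3) (- (m - 1) * r)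
        + {# - (2 * m - 1) * r #}
        + proots (lin ((2 * m - 1) * r) * lin ((m - 1) * (m - 3) * r) * lin ((m / 2 - 1) * (m / 2 + 1) * r) ^ 2
            - Polynomial.smult (2 * (m - 2) * (5 * m^2 - 6 * m + 2)) (lin ((m / 2 - 1) * (m / 2 + 1) * r) ^ 2)
            - Polynomial.smult (2 * m * ((2 * m - 1)^2 + (m / 2 + 1)^2))
                (lin ((m - 3) * (m - 1) * r) * lin ((m / 2 - 1) * (m / 2 + 1) * r))))"
  proof (intro conjI impI)
  assume "odd n"
  thus "Spec = replicate_mset (n - 2) (- (m - 1) * r) + replicate_mset (n - 1) (- m * r)
        + proots ([:0, 1:] * lin ((m - 1) * (m - 2) * r) * lin (m * (m - 1) * r)
            - Polynomial.smult ((m - 1) * (5 * m^2 - 6 * m + 2)) (lin (m * (m - 1) * r))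
            - Polynomial.smult (m * (5 * m^2 - 4 * m + 1)) (lin ((m - 1) * (m - 2) * r)))"
    unfolding Spec_def m_def r_def by (rule case_odd[OF assms(1)])
next
  assume "even n \<and> odd (n div 2)"
  thus "Spec = replicate_mset (n - 1) (- (m + 1) * r) + replicate_mset (n - 3) (- (m - 1) * r)
        + {# - (2 * m - 1) * r #}
        + proots (lin ((2 * m - 1) * r) * lin ((m - 1) * (m + 1) * r) * lin ((m - 1) * (m - 3) * r)
            - Polynomial.smult (2 * (m - 2) * (5 * m^2 - 6 * m + 2)) (lin ((m - 1) * (m + 1) * r))
            - Polynomial.smult (2 * m * (5 * m^2 - 2 * m + 2)) (lin ((m - 1) * (m - 3) * r)))"
    unfolding Spec_def m_def r_def using case_2mod4[OF assms(1)] by blast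
next
  assume "4 dvd n"
  thus "Spec = replicate_mset (n - 2) (- (m / 2 + 1) * r) + replicate_mset (n - 3) (- (m - 1) * r)
        + {# - (2 * m - 1) * r #}
        + proots (lin ((2 * m - 1) * r) * lin ((m - 1) * (m - 3) * r) * lin ((m / 2 - 1) * (m / 2 + 1) * r) ^ 2
            - Polynomial.smult (2 * (m - 2) * (5 * m^2 - 6 * m + 2)) (lin ((m / 2 - 1) * (m / 2 + 1) * r) ^ 2)
            - Polynomial.smult (2 * m * ((2 * m - 1)^2 + (m / 2 + 1)^2))
                (lin ((m - 3) * (m - 1) * r) * lin ((m / 2 - 1) * (m / 2 + 1) * r)))"
    unfolding Spec_def m_def r_def by (rule case_4dvd[OF assms(1)])
qed

end
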